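(* Let $\mathcal{V},\mathcal{W}$ be $\mathcal{K}$-operator spaces such that $\mathcal{V}$ is a bi-$\mathcal{K}$-invariant subspace of $\mathcal{W}$ (with the restricted norm). Then for every continuous bi-$\mathcal{K}$-linear map $\varphi:\mathcal{V}\to\mathcal{K}$ there is a continuous bi-$\mathcal{K}$-linear map $\bar\varphi:\mathcal{W}\to\mathcal{K}$ with $\bar\varphi|_{\mathcal{V}}=\varphi$ and $\|\bar\varphi\|=\|\varphi\|$.
   Context: $\mathcal{K}$ denotes the C*-algebra of compact operators on $\ell^2$. A $\mathcal{K}$-operator space is an essential $\mathcal{K}$-bimodule $\mathcal{V}$ with a norm that is absolutely $\mathcal{K}$-convex: whenever $v_1,v_2$ lie in the unit ball of $\mathcal{V}$, so does $\alpha_1v_1\beta_1+\alpha_2v_2\beta_2$ for all $\alpha_i,\beta_i\in\mathcal{K}$ with $\|\alpha_1\alpha_1^*+\alpha_2\alpha_2^*\|\le1$ and $\|\beta_1^*\beta_1+\beta_2^*\beta_2\|\le1$. $\mathcal{K}$ is regarded as a $\mathcal{K}$-operator space with its operator norm and multiplication. A map $\varphi$ is bi-$\mathcal{K}$-linear if $\varphi(\alpha v\beta)=\alpha\varphi(v)\beta$ for all $\alpha,\beta\in\mathcal{K}$. *)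

theory Defs
  imports "HOL-Analysis.Analysis"
begin

type_synonym vec = "nat \<Rightarrow> complex"
type_synonym op = "vec \<Rightarrow> vec"

definition l2 :: "vec set" where
  "l2 = {x. summable (\<lambda>n. (cmod (x n))\<^sup>2)}"

definition l2_norm :: "vec \<Rightarrow> real" where
  "l2_norm x = sqrt (\<Sum>n. (cmod (x n))\<^sup>2)"

definition l2_inner :: "vec \<Rightarrow> vec \<Rightarrow> complex" where
  "l2_inner x y = (\<Sum>n. x n * cnj (y n))"

definition vadd :: "vec \<Rightarrow> vec \<Rightarrow> vec" where
  "vadd x y = (\<lambda>n. x n + y n)"

definition vscale :: "complex \<Rightarrow> vec \<Rightarrow> vec" where
  "vscale c x = (\<lambda>n. c * x n)"

definition vzero :: vec where
  "vzero = (\<lambda>n. 0)"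

text \<open>Operators are functions on sequences; they are normalised to be 0 outside ell^2,
  so that two operators agreeing on ell^2 are equal.\<close>

definition bounded_op :: "op \<Rightarrow> bool" where
  "bounded_op T \<longleftrightarrow>
     (\<forall>x\<in>l2. T x \<in> l2) \<and>
     (\<forall>x. x \<notin> l2 \<longrightarrow> T x = vzero) \<and>
     (\<forall>x\<in>l2. \<forall>y\<in>l2. T (vadd x y) = vadd (T x) (T y)) \<and>
     (\<forall>c. \<forall>x\<in>l2. T (vscale c x) = vscale c (T x)) \<and>
     (\<exists>C. \<forall>x\<in>l2. l2_norm (T x) \<le> C * l2_norm x)"

definition compact_op :: "op \<Rightarrow> bool" where
  "compact_op T \<longleftrightarrow> bounded_op T \<and>
     (\<forall>e>0. \<exists>F. finite F \<and> F \<subseteq> l2 \<and>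
        (\<forall>x\<in>l2. l2_norm x \<le> 1 \<longrightarrow> (\<exists>y\<in>F. l2_norm (vadd (T x) (vscale (-1) y)) < e)))"

definition Kc :: "op set" where
  "Kc = {T. compact_op T}"

definition op_norm :: "op \<Rightarrow> real" where
  "op_norm T = Sup {l2_norm (T x) | x. x \<in> l2 \<and> l2_norm x \<le> 1}"

definition adj :: "op \<Rightarrow> op" where
  "adj T = (\<lambda>y. if y \<in> l2 then (THE z. z \<in> l2 \<and> (\<forall>x\<in>l2. l2_inner (T x) y = l2_inner x z))
               else vzero)"

definition opadd :: "op \<Rightarrow> op \<Rightarrow> op" where
  "opadd S T = (\<lambda>x. vadd (S x) (T x))"

definition opscale :: "complex \<Rightarrow> op \<Rightarrow> op" where
  "opscale c T = (\<lambda>x. vscale c (T x))"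

record 'v kspace =
  kcarrier :: "'v set"
  kzero :: "'v"
  kplus :: "'v \<Rightarrow> 'v \<Rightarrow> 'v"
  kscale :: "complex \<Rightarrow> 'v \<Rightarrow> 'v"
  lact :: "op \<Rightarrow> 'v \<Rightarrow> 'v"
  ract :: "'v \<Rightarrow> op \<Rightarrow> 'v"
  knorm :: "'v \<Rightarrow> real"

definition complex_vs :: "'v kspace \<Rightarrow> bool" where
  "complex_vs M \<longleftrightarrow> (let C = kcarrier M; p = kplus M; s = kscale M; z = kzero M in
     z \<in> C \<and>
     (\<forall>v\<in>C. \<forall>w\<in>C. p v w \<in> C) \<and>
     (\<forall>c. \<forall>v\<in>C. s c v \<in> C) \<and>
     (\<forall>u\<in>C. \<forall>v\<in>C. \<forall>w\<in>C. p (p u v) w = p u (p v w)) \<and>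
     (\<forall>v\<in>C. \<forall>w\<in>C. p v w = p w v) \<and>
     (\<forall>v\<in>C. p z v = v) \<and>
     (\<forall>v\<in>C. p v (s (-1) v) = z) \<and>
     (\<forall>c. \<forall>v\<in>C. \<forall>w\<in>C. s c (p v w) = p (s c v) (s c w)) \<and>
     (\<forall>c d. \<forall>v\<in>C. s (c + d) v = p (s c v) (s d v)) \<and>
     (\<forall>c d. \<forall>v\<in>C. s c (s d v) = s (c * d) v) \<and>
     (\<forall>v\<in>C. s 1 v = v))"

definition K_bimodule :: "'v kspace \<Rightarrow> bool" where
  "K_bimodule M \<longleftrightarrow> complex_vs M \<and>
    (let C = kcarrier M; p = kplus M; s = kscale M; l = lact M; r = ract M in
     (\<forall>a\<in>Kc. \<forall>v\<in>C. l a v \<in> C \<and> r v a \<in> C) \<and>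
     (\<forall>a\<in>Kc. \<forall>b\<in>Kc. \<forall>v\<in>C. l (a \<circ> b) v = l a (l b v) \<and> r v (a \<circ> b) = r (r v a) b) \<and>
     (\<forall>a\<in>Kc. \<forall>b\<in>Kc. \<forall>v\<in>C. l (opadd a b) v = p (l a v) (l b v)
                              \<and> r v (opadd a b) = p (r v a) (r v b)) \<and>
     (\<forall>a\<in>Kc. \<forall>v\<in>C. \<forall>w\<in>C. l a (p v w) = p (l a v) (l a w) \<and> r (p v w) a = p (r v a) (r w a)) \<and>
     (\<forall>c. \<forall>a\<in>Kc. \<forall>v\<in>C. l (opscale c a) v = s c (l a v) \<and> l a (s c v) = s c (l a v)
                        \<and> r v (opscale c a) = s c (r v a) \<and> r (s c v) a = s c (r v a)) \<and>
     (\<forall>a\<in>Kc. \<forall>b\<in>Kc. \<forall>v\<in>C. l a (r v b) = r (l a v) b))"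

definition essential :: "'v kspace \<Rightarrow> bool" where
  "essential M \<longleftrightarrow> (\<forall>v\<in>kcarrier M.
     (\<exists>a\<in>Kc. \<exists>w\<in>kcarrier M. v = lact M a w) \<and>
     (\<exists>b\<in>Kc. \<exists>w\<in>kcarrier M. v = ract M w b))"

definition is_norm :: "'v kspace \<Rightarrow> bool" where
  "is_norm M \<longleftrightarrow> (\<forall>v\<in>kcarrier M. knorm M v \<ge> 0 \<and> (knorm M v = 0 \<longleftrightarrow> v = kzero M)) \<and>
     (\<forall>c. \<forall>v\<in>kcarrier M. knorm M (kscale M c v) = cmod c * knorm M v) \<and>
     (\<forall>v\<in>kcarrier M. \<forall>w\<in>kcarrier M. knorm M (kplus M v w) \<le> knorm M v + knorm M w)"

definition abs_K_convex :: "'v kspace \<Rightarrow> bool" where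
  "abs_K_convex M \<longleftrightarrow> (\<forall>v1\<in>kcarrier M. \<forall>v2\<in>kcarrier M. \<forall>a1\<in>Kc. \<forall>a2\<in>Kc. \<forall>b1\<in>Kc. \<forall>b2\<in>Kc.
     knorm M v1 \<le> 1 \<longrightarrow> knorm M v2 \<le> 1 \<longrightarrow>
     op_norm (opadd (a1 \<circ> adj a1) (a2 \<circ> adj a2)) \<le> 1 \<longrightarrow>
     op_norm (opadd (adj b1 \<circ> b1) (adj b2 \<circ> b2)) \<le> 1 \<longrightarrow>
     knorm M (kplus M (ract M (lact M a1 v1) b1) (ract M (lact M a2 v2) b2)) \<le> 1)"

definition K_operator_space :: "'v kspace \<Rightarrow> bool" where
  "K_operator_space M \<longleftrightarrow> K_bimodule M \<and> essential M \<and> is_norm M \<and> abs_K_convex M"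

definition biK_invariant_subspace :: "'v set \<Rightarrow> 'v kspace \<Rightarrow> bool" where
  "biK_invariant_subspace V W \<longleftrightarrow> V \<subseteq> kcarrier W \<and> kzero W \<in> V \<and>
     (\<forall>v\<in>V. \<forall>w\<in>V. kplus W v w \<in> V) \<and> (\<forall>c. \<forall>v\<in>V. kscale W c v \<in> V) \<and>
     (\<forall>a\<in>Kc. \<forall>v\<in>V. lact W a v \<in> V \<and> ract W v a \<in> V)"

definition biK_linear_map :: "'v kspace \<Rightarrow> ('v \<Rightarrow> op) \<Rightarrow> bool" where
  "biK_linear_map M f \<longleftrightarrow>
     (\<forall>v\<in>kcarrier M. f v \<in> Kc) \<and>
     (\<forall>v\<in>kcarrier M. \<forall>w\<in>kcarrier M. f (kplus M v w) = opadd (f v) (f w)) \<and>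
     (\<forall>c. \<forall>v\<in>kcarrier M. f (kscale M c v) = opscale c (f v)) \<and>
     (\<forall>a\<in>Kc. \<forall>b\<in>Kc. \<forall>v\<in>kcarrier M. f (ract M (lact M a v) b) = a \<circ> f v \<circ> b)"

definition kcontinuous :: "'v kspace \<Rightarrow> ('v \<Rightarrow> op) \<Rightarrow> bool" where
  "kcontinuous M f \<longleftrightarrow> (\<forall>v\<in>kcarrier M. \<forall>e>0. \<exists>d>0. \<forall>w\<in>kcarrier M.
     knorm M (kplus M w (kscale M (-1) v)) < d \<longrightarrow> op_norm (opadd (f w) (opscale (-1) (f v))) < e)"

definition kmap_norm :: "'v kspace \<Rightarrow> ('v \<Rightarrow> op) \<Rightarrow> real" where
  "kmap_norm M f = Sup {op_norm (f v) | v. v \<in> kcarrier M \<and> knorm M v \<le> 1}"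

end

theory Submission
  imports Defs
begin


definition ebas :: "nat \<Rightarrow> vec" where "ebas k = (\<lambda>n. if n = k then 1 else 0)"
definition trunc :: "nat \<Rightarrow> vec \<Rightarrow> vec" where "trunc m x = (\<lambda>n. if n < m then x n else 0)"
definition tail :: "nat \<Rightarrow> vec \<Rightarrow> vec" where "tail m x = (\<lambda>n. if n < m then 0 else x n)"

lemma l2_iff: "x \<in> l2 \<longleftrightarrow> summable (\<lambda>n. (cmod (x n))\<^sup>2)" by (simp add: l2_def)

lemma finite_support_summable:
  fixes f :: "nat \<Rightarrow> 'a::{topological_comm_monoid_add, t2_space}"
  shows "(\<And>n. n \<ge> m \<Longrightarrow> f n = 0) \<Longrightarrow> summable f"
  by (rule summable_finite[of "{..<m}"]) auto

lemma l2_vzero[simp]: "vzero \<in> l2"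
  by (simp add: l2_def vzero_def)

lemma l2_ebas[simp]: "ebas k \<in> l2"
  unfolding l2_iff ebas_def mem_Collect_eq by (rule finite_support_summable[of "Suc k"]) auto

lemma l2_trunc[simp]: "trunc m x \<in> l2"
  unfolding l2_iff trunc_def mem_Collect_eq by (rule finite_support_summable[of m]) auto

lemma sq_sum_le: "(cmod (a + b))\<^sup>2 \<le> 2 * (cmod a)\<^sup>2 + 2 * (cmod b)\<^sup>2"
proof -
  have "cmod (a+b) \<le> cmod a + cmod b" by (rule norm_triangle_ineq)
  hence "(cmod (a+b))\<^sup>2 \<le> (cmod a + cmod b)\<^sup>2" by (simp add: power_mono)
  also have "\<dots> \<le> 2 * (cmod a)\<^sup>2 + 2 * (cmod b)\<^sup>2"
  proof -
    have "0 \<le> (cmod a - cmod b)\<^sup>2" by simp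
    thus ?thesis unfolding power2_diff power2_sum by linarith
  qed
  finally show ?thesis .
qed

lemma l2_vadd[simp]: "x \<in> l2 \<Longrightarrow> y \<in> l2 \<Longrightarrow> vadd x y \<in> l2"
  unfolding l2_iff vadd_def
proof -
  assume a: "summable (\<lambda>n. (cmod (x n))\<^sup>2)" "summable (\<lambda>n. (cmod (y n))\<^sup>2)"
  have s: "summable (\<lambda>n. 2 * (cmod (x n))\<^sup>2 + 2 * (cmod (y n))\<^sup>2)"
    using a by (intro summable_add summable_mult) auto
  show "summable (\<lambda>n. (cmod (x n + y n))\<^sup>2)"
    by (rule summable_comparison_test[OF _ s]) (auto intro: sq_sum_le)
qed

lemma l2_vscale[simp]: "x \<in> l2 \<Longrightarrow> vscale c x \<in> l2"
  unfolding l2_iff vscale_def by (simp add: norm_mult power_mult_distrib summable_mult)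

lemma l2_tail[simp]: "x \<in> l2 \<Longrightarrow> tail m x \<in> l2"
proof -
  assume "x \<in> l2"
  have "tail m x = vadd x (vscale (-1) (trunc m x))"
    by (auto simp: tail_def vadd_def vscale_def trunc_def)
  thus ?thesis using \<open>x \<in> l2\<close> by simp
qed

lemma l2_norm_nonneg[simp]: "x \<in> l2 \<Longrightarrow> l2_norm x \<ge> 0"
  unfolding l2_norm_def l2_iff by (simp add: suminf_nonneg)

lemma l2_norm_sq: "x \<in> l2 \<Longrightarrow> (l2_norm x)\<^sup>2 = (\<Sum>n. (cmod (x n))\<^sup>2)"
  unfolding l2_norm_def l2_iff by (simp add: suminf_nonneg)

lemma l2_norm_vscale: "x \<in> l2 \<Longrightarrow> l2_norm (vscale c x) = cmod c * l2_norm x"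
  unfolding l2_norm_def vscale_def l2_iff
  by (simp add: norm_mult power_mult_distrib suminf_mult real_sqrt_mult)

lemma l2_norm_vzero[simp]: "l2_norm vzero = 0"
  by (simp add: l2_norm_def vzero_def)

lemma l2_norm_zero_iff: "x \<in> l2 \<Longrightarrow> l2_norm x = 0 \<longleftrightarrow> x = vzero"
proof
  assume x: "x \<in> l2" and z: "l2_norm x = 0"
  hence "(\<Sum>n. (cmod (x n))\<^sup>2) = 0" using l2_norm_sq by fastforce
  hence "\<forall>n. (cmod (x n))\<^sup>2 = 0" using x unfolding l2_iff
    using suminf_eq_zero_iff by fastforce
  thus "x = vzero" by (auto simp: vzero_def)
qed simp

lemma l2_coord_le: "x \<in> l2 \<Longrightarrow> cmod (x k) \<le> l2_norm x"
proof -
  assume x: "x \<in> l2"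
  have "(cmod (x k))\<^sup>2 \<le> (\<Sum>n. (cmod (x n))\<^sup>2)"
    using sum_le_suminf[of "\<lambda>n. (cmod (x n))\<^sup>2" "{k}"] x by (auto simp: l2_iff)
  hence "(cmod (x k))\<^sup>2 \<le> (l2_norm x)\<^sup>2" using l2_norm_sq[OF x] by simp
  thus ?thesis by (rule power2_le_imp_le) (simp add: x)
qed

lemma l2_norm_ebas[simp]: "l2_norm (ebas k) = 1"
proof -
  have "(\<Sum>n. (cmod (ebas k n))\<^sup>2) = (\<Sum>n\<in>{k}. (cmod (ebas k n))\<^sup>2)"
    by (rule suminf_finite) (auto simp: ebas_def)
  thus ?thesis by (simp add: l2_norm_def ebas_def)
qed

lemma l2_prod_summable:
  assumes "x \<in> l2" "y \<in> l2"
  shows "summable (\<lambda>n. cmod (x n) * cmod (y n))"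
proof -
  have s: "summable (\<lambda>n. (cmod (x n))\<^sup>2 + (cmod (y n))\<^sup>2)"
    using assms by (intro summable_add) (auto simp: l2_iff)
  show ?thesis
  proof (rule summable_comparison_test[OF _ s], intro exI allI impI)
    fix n
    have "0 \<le> (cmod (x n) - cmod (y n))\<^sup>2" by simp
    hence "2 * (cmod (x n) * cmod (y n)) \<le> (cmod (x n))\<^sup>2 + (cmod (y n))\<^sup>2"
      unfolding power2_diff by linarith
    thus "norm (cmod (x n) * cmod (y n)) \<le> (cmod (x n))\<^sup>2 + (cmod (y n))\<^sup>2"
      by (simp add: abs_mult) (smt (verit) mult_nonneg_nonneg norm_ge_zero)
  qed
qed

lemma l2_inner_summable:
  assumes "x \<in> l2" "y \<in> l2"
  shows "summable (\<lambda>n. x n * cnj (y n))"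
  by (rule summable_norm_cancel, rule summable_comparison_test[OF _ l2_prod_summable[OF assms]])
     (auto simp: norm_mult)

lemma cauchy_schwarz_l2:
  assumes x: "x \<in> l2" and y: "y \<in> l2"
  shows "cmod (l2_inner x y) \<le> l2_norm x * l2_norm y"
proof -
  have s: "summable (\<lambda>n. cmod (x n) * cmod (y n))" by (rule l2_prod_summable[OF x y])
  have "cmod (l2_inner x y) \<le> (\<Sum>n. norm (x n * cnj (y n)))"
    unfolding l2_inner_def
    by (rule summable_norm, rule summable_comparison_test[OF _ s]) (auto simp: norm_mult)
  also have "\<dots> = (\<Sum>n. cmod (x n) * cmod (y n))" by (simp add: norm_mult)
  also have "\<dots> \<le> l2_norm x * l2_norm y"
  proof (rule suminf_le_const[OF s])
    fix m
    have "(\<Sum>n<m. cmod (x n) * cmod (y n)) = (\<Sum>n<m. \<bar>cmod (x n)\<bar> * \<bar>cmod (y n)\<bar>)" by simp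
    also have "\<dots> \<le> L2_set (\<lambda>n. cmod (x n)) {..<m} * L2_set (\<lambda>n. cmod (y n)) {..<m}"
      by (rule L2_set_mult_ineq)
    also have "\<dots> \<le> l2_norm x * l2_norm y"
    proof (rule mult_mono)
      show "L2_set (\<lambda>n. cmod (x n)) {..<m} \<le> l2_norm x"
        unfolding L2_set_def l2_norm_def
        using sum_le_suminf[of "\<lambda>n. (cmod (x n))\<^sup>2" "{..<m}"] x by (auto simp: l2_iff)
      show "L2_set (\<lambda>n. cmod (y n)) {..<m} \<le> l2_norm y"
        unfolding L2_set_def l2_norm_def
        using sum_le_suminf[of "\<lambda>n. (cmod (y n))\<^sup>2" "{..<m}"] y by (auto simp: l2_iff)
    qed (auto simp: L2_set_def x intro: sum_nonneg)
    finally show "(\<Sum>n<m. cmod (x n) * cmod (y n)) \<le> l2_norm x * l2_norm y" .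
  qed
  finally show ?thesis .
qed

lemma l2_inner_vadd_left: "x \<in> l2 \<Longrightarrow> y \<in> l2 \<Longrightarrow> u \<in> l2 \<Longrightarrow>
   l2_inner (vadd x y) u = l2_inner x u + l2_inner y u"
  unfolding l2_inner_def vadd_def
  by (simp add: distrib_right suminf_add l2_inner_summable)

lemma l2_inner_vscale_left: "x \<in> l2 \<Longrightarrow> u \<in> l2 \<Longrightarrow>
   l2_inner (vscale c x) u = c * l2_inner x u"
  unfolding l2_inner_def vscale_def
  by (subst suminf_mult[symmetric]) (auto intro: l2_inner_summable simp: mult.assoc)

lemma l2_inner_vadd_right: "x \<in> l2 \<Longrightarrow> y \<in> l2 \<Longrightarrow> u \<in> l2 \<Longrightarrow>
   l2_inner u (vadd x y) = l2_inner u x + l2_inner u y"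
  unfolding l2_inner_def vadd_def
  by (simp add: distrib_left suminf_add l2_inner_summable)

lemma l2_inner_vscale_right: "x \<in> l2 \<Longrightarrow> u \<in> l2 \<Longrightarrow>
   l2_inner u (vscale c x) = cnj c * l2_inner u x"
  unfolding l2_inner_def vscale_def
  by (subst suminf_mult[symmetric]) (auto intro: l2_inner_summable simp: algebra_simps)

lemma l2_inner_ebas_right[simp]: "l2_inner x (ebas k) = x k"
proof -
  have "(\<Sum>n. x n * cnj (ebas k n)) = (\<Sum>n\<in>{k}. x n * cnj (ebas k n))"
    by (rule suminf_finite) (auto simp: ebas_def)
  thus ?thesis by (simp add: l2_inner_def ebas_def)
qed

lemma l2_inner_ebas_left[simp]: "l2_inner (ebas k) x = cnj (x k)"
proof -
  have "(\<Sum>n. ebas k n * cnj (x n)) = (\<Sum>n\<in>{k}. ebas k n * cnj (x n))"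
    by (rule suminf_finite) (auto simp: ebas_def)
  thus ?thesis by (simp add: l2_inner_def ebas_def)
qed

lemma l2_inner_vzero_left[simp]: "l2_inner vzero x = 0"
  by (simp add: l2_inner_def vzero_def)

lemma l2_inner_self: "x \<in> l2 \<Longrightarrow> l2_inner x x = of_real ((l2_norm x)\<^sup>2)"
proof -
  assume x: "x \<in> l2"
  have "l2_inner x x = (\<Sum>n. of_real ((cmod (x n))\<^sup>2))"
    unfolding l2_inner_def by (simp only: complex_norm_square)
  also have "\<dots> = of_real (\<Sum>n. (cmod (x n))\<^sup>2)"
    using x by (simp add: l2_iff suminf_of_real)
  finally show ?thesis using l2_norm_sq[OF x] by simp
qed

lemma l2_inner_cnj: "x \<in> l2 \<Longrightarrow> y \<in> l2 \<Longrightarrow> l2_inner y x = cnj (l2_inner x y)"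
proof -
  assume x: "x \<in> l2" and y: "y \<in> l2"
  have "(\<lambda>n. x n * cnj (y n)) sums l2_inner x y"
    unfolding l2_inner_def using l2_inner_summable[OF x y] by (simp add: summable_sums)
  hence "(\<lambda>n. cnj (x n * cnj (y n))) sums cnj (l2_inner x y)" by (simp only: sums_cnj)
  hence "(\<lambda>n. y n * cnj (x n)) sums cnj (l2_inner x y)" by (simp add: mult.commute)
  thus ?thesis unfolding l2_inner_def by (simp add: sums_unique[symmetric])
qed



lemma vadd_vzero_right[simp]: "vadd x vzero = x" by (simp add: vadd_def vzero_def)
lemma vadd_vzero_left[simp]: "vadd vzero x = x" by (simp add: vadd_def vzero_def)
lemma vscale_vzero[simp]: "vscale c vzero = vzero" by (simp add: vscale_def vzero_def)
lemma vscale_zero[simp]: "vscale 0 x = vzero" by (simp add: vscale_def vzero_def)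
lemma vscale_vadd: "vscale c (vadd x y) = vadd (vscale c x) (vscale c y)"
  by (simp add: vscale_def vadd_def fun_eq_iff algebra_simps)
lemma vscale_vscale: "vscale c (vscale d x) = vscale (c * d) x"
  by (simp add: vscale_def fun_eq_iff algebra_simps)
lemma vadd_scale_distrib: "vadd (vscale c x) (vscale d x) = vscale (c + d) x"
  by (simp add: vscale_def vadd_def fun_eq_iff algebra_simps)

lemma cnj_mult_self: "cnj a * a = complex_of_real ((cmod a)\<^sup>2)"
  using complex_norm_square[of a] by (simp only: mult.commute)

lemma trunc_tail: "vadd (trunc m x) (tail m x) = x"
  by (simp add: trunc_def tail_def vadd_def fun_eq_iff)

lemma trunc_Suc: "trunc (Suc m) x = vadd (trunc m x) (vscale (x m) (ebas m))"
  by (auto simp: trunc_def vadd_def vscale_def ebas_def fun_eq_iff less_Suc_eq)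

lemma trunc_0: "trunc 0 x = vzero" by (simp add: trunc_def vzero_def)

lemma l2_norm_tail_lim:
  assumes x: "x \<in> l2"
  shows "(\<lambda>m. l2_norm (tail m x)) \<longlonglongrightarrow> 0"
proof -
  let ?f = "\<lambda>n. (cmod (x n))\<^sup>2"
  have sf: "summable ?f" using x by (simp add: l2_iff)
  have eq: "(l2_norm (tail m x))\<^sup>2 = suminf ?f - (\<Sum>n<m. ?f n)" for m
  proof -
    have st: "summable (\<lambda>n. (cmod (tail m x n))\<^sup>2)" using l2_tail[OF x] by (simp add: l2_iff)
    have s2: "summable (\<lambda>n. if n < m then ?f n else 0)"
      by (rule finite_support_summable[of m]) auto
    have "(\<lambda>n. ?f n) = (\<lambda>n. (if n < m then ?f n else 0) + (cmod (tail m x n))\<^sup>2)"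
      by (auto simp: tail_def fun_eq_iff)
    hence "suminf ?f = (\<Sum>n. (if n < m then ?f n else 0)) + (\<Sum>n. (cmod (tail m x n))\<^sup>2)"
      using suminf_add[OF s2 st] by simp
    moreover have "(\<Sum>n. (if n < m then ?f n else 0)) = (\<Sum>n<m. ?f n)"
      by (subst suminf_finite[of "{..<m}"]) auto
    ultimately show ?thesis using l2_norm_sq[OF l2_tail[OF x]] by simp
  qed
  have "(\<lambda>m. suminf ?f - (\<Sum>n<m. ?f n)) \<longlonglongrightarrow> suminf ?f - suminf ?f"
    by (intro tendsto_intros summable_LIMSEQ sf)
  hence "(\<lambda>m. (l2_norm (tail m x))\<^sup>2) \<longlonglongrightarrow> 0" using eq by simp
  hence "(\<lambda>m. sqrt ((l2_norm (tail m x))\<^sup>2)) \<longlonglongrightarrow> sqrt 0" by (intro tendsto_intros)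
  thus ?thesis using l2_tail[OF x] by (simp add: l2_norm_nonneg)
qed

lemma lin_vzero:
  assumes sc: "\<And>c x. x \<in> l2 \<Longrightarrow> g (vscale c x) = c * g x"
  shows "g vzero = (0::complex)"
  using sc[of vzero 0] by simp

lemma lin_trunc:
  assumes add: "\<And>x y. x \<in> l2 \<Longrightarrow> y \<in> l2 \<Longrightarrow> g (vadd x y) = g x + g y"
    and sc: "\<And>c x. x \<in> l2 \<Longrightarrow> g (vscale c x) = c * g x"
  shows "g (trunc m x) = (\<Sum>k<m. x k * g (ebas k))"
proof (induction m)
  case 0 then show ?case using lin_vzero[OF sc] by (simp add: trunc_0)
next
  case (Suc m)
  then show ?case by (simp add: trunc_Suc add sc)
qed

lemma riesz:
  assumes add: "\<And>x y. x \<in> l2 \<Longrightarrow> y \<in> l2 \<Longrightarrow> g (vadd x y) = g x + g y"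
    and sc: "\<And>c x. x \<in> l2 \<Longrightarrow> g (vscale c x) = c * g x"
    and bd: "\<And>x. x \<in> l2 \<Longrightarrow> cmod (g x) \<le> B * l2_norm x"
  shows "(\<lambda>k. cnj (g (ebas k))) \<in> l2"
    and "\<And>x. x \<in> l2 \<Longrightarrow> g x = l2_inner x (\<lambda>k. cnj (g (ebas k)))"
proof -
  define z where "z = (\<lambda>k. cnj (g (ebas k)))"
  define S where "S m = (\<Sum>k<m. (cmod (z k))\<^sup>2)" for m
  have S_nonneg: "S m \<ge> 0" for m unfolding S_def by (simp add: sum_nonneg)
  have normtr: "(l2_norm (trunc m z))\<^sup>2 = S m" for m
  proof -
    have "(\<Sum>n. (cmod (trunc m z n))\<^sup>2) = (\<Sum>n<m. (cmod (trunc m z n))\<^sup>2)"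
      by (rule suminf_finite) (auto simp: trunc_def)
    thus ?thesis using l2_norm_sq[OF l2_trunc] by (simp add: S_def trunc_def)
  qed
  have gtr: "g (trunc m z) = of_real (S m)" for m
  proof -
    have "g (trunc m z) = (\<Sum>k<m. z k * g (ebas k))" by (rule lin_trunc[OF add sc])
    also have "\<dots> = (\<Sum>k<m. of_real ((cmod (z k))\<^sup>2))"
      by (rule sum.cong) (simp_all add: z_def cnj_mult_self del: of_real_power)
    finally show ?thesis by (simp add: S_def)
  qed
  have Sbd: "S m \<le> B\<^sup>2" for m
  proof -
    have "S m = cmod (g (trunc m z))" using gtr S_nonneg by simp
    also have "\<dots> \<le> B * l2_norm (trunc m z)" by (rule bd) simp
    also have "l2_norm (trunc m z) = sqrt (S m)"
      using normtr[of m] l2_norm_nonneg[OF l2_trunc] by (metis real_sqrt_unique)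
    finally have h: "S m \<le> B * sqrt (S m)" .
    show ?thesis
    proof (cases "S m = 0")
      case True thus ?thesis by simp
    next
      case False
      hence pos: "sqrt (S m) > 0" using S_nonneg by (simp add: order_neq_le_trans)
      have "sqrt (S m) * sqrt (S m) \<le> B * sqrt (S m)" using h S_nonneg by simp
      hence "sqrt (S m) \<le> B" using pos by (rule mult_right_le_imp_le)
      hence "(sqrt (S m))\<^sup>2 \<le> B\<^sup>2" using pos by (intro power_mono) auto
      thus ?thesis using S_nonneg by simp
    qed
  qed
  have zl2: "z \<in> l2" unfolding l2_iff
  proof (rule bounded_imp_summable)
    show "(\<Sum>k\<le>n. (cmod (z k))\<^sup>2) \<le> B\<^sup>2" for n
      using Sbd[of "Suc n"] by (simp add: S_def lessThan_Suc_atMost)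
  qed simp
  thus "(\<lambda>k. cnj (g (ebas k))) \<in> l2" by (simp add: z_def)
  fix x assume x: "x \<in> l2"
  have lim1: "(\<lambda>m. g (trunc m x)) \<longlonglongrightarrow> l2_inner x z"
  proof -
    have "g (trunc m x) = (\<Sum>k<m. x k * cnj (z k))" for m
      using lin_trunc[OF add sc] by (simp add: z_def)
    moreover have "(\<lambda>m. (\<Sum>k<m. x k * cnj (z k))) \<longlonglongrightarrow> l2_inner x z"
      unfolding l2_inner_def by (rule summable_LIMSEQ, rule l2_inner_summable[OF x zl2])
    ultimately show ?thesis by simp
  qed
  have lim2: "(\<lambda>m. g (trunc m x)) \<longlonglongrightarrow> g x"
  proof -
    have eqm: "g x - g (trunc m x) = g (tail m x)" for m
      using add[OF l2_trunc[of m x] l2_tail[OF x, of m]] trunc_tail[of m x] by simp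
    have "(\<lambda>m. B * l2_norm (tail m x)) \<longlonglongrightarrow> B * 0"
      by (intro tendsto_intros l2_norm_tail_lim x)
    moreover have "\<forall>\<^sub>F m in sequentially. norm (g x - g (trunc m x)) \<le> B * l2_norm (tail m x)"
    proof (rule always_eventually, rule allI)
      fix m show "norm (g x - g (trunc m x)) \<le> B * l2_norm (tail m x)"
        unfolding eqm by (rule bd, rule l2_tail[OF x])
    qed
    ultimately have "(\<lambda>m. g x - g (trunc m x)) \<longlonglongrightarrow> 0"
      using Lim_null_comparison by fastforce
    hence "(\<lambda>m. g x - (g x - g (trunc m x))) \<longlonglongrightarrow> g x - 0" by (intro tendsto_intros)
    thus ?thesis by simp
  qed
  show "g x = l2_inner x (\<lambda>k. cnj (g (ebas k)))"
    using LIMSEQ_unique[OF lim2 lim1] by (simp add: z_def)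
qed


definition zop :: op where "zop = (\<lambda>x. vzero)"
definition rowop :: "vec \<Rightarrow> op" where
  "rowop y = (\<lambda>x. if x \<in> l2 then vscale (l2_inner x y) (ebas 0) else vzero)"
definition colop :: "vec \<Rightarrow> op" where
  "colop y = (\<lambda>x. if x \<in> l2 then vscale (x 0) y else vzero)"

lemma vscale_one[simp]: "vscale 1 x = x" by (simp add: vscale_def)

lemma bounded_opI:
  assumes "\<And>x. x \<in> l2 \<Longrightarrow> T x \<in> l2" "\<And>x. x \<notin> l2 \<Longrightarrow> T x = vzero"
    "\<And>x y. x \<in> l2 \<Longrightarrow> y \<in> l2 \<Longrightarrow> T (vadd x y) = vadd (T x) (T y)"
    "\<And>c x. x \<in> l2 \<Longrightarrow> T (vscale c x) = vscale c (T x)"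
    "\<And>x. x \<in> l2 \<Longrightarrow> l2_norm (T x) \<le> C * l2_norm x"
  shows "bounded_op T"
  using assms unfolding bounded_op_def by blast

lemma bounded_opD:
  assumes "bounded_op T"
  shows "\<And>x. x \<in> l2 \<Longrightarrow> T x \<in> l2" "\<And>x. x \<notin> l2 \<Longrightarrow> T x = vzero"
    "\<And>x y. x \<in> l2 \<Longrightarrow> y \<in> l2 \<Longrightarrow> T (vadd x y) = vadd (T x) (T y)"
    "\<And>c x. x \<in> l2 \<Longrightarrow> T (vscale c x) = vscale c (T x)"
  using assms unfolding bounded_op_def by blast+

lemma bounded_op_bound:
  assumes "bounded_op T"
  obtains C where "C \<ge> 0" "\<And>x. x \<in> l2 \<Longrightarrow> l2_norm (T x) \<le> C * l2_norm x"
proof -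
  obtain C where C: "\<forall>x\<in>l2. l2_norm (T x) \<le> C * l2_norm x" using assms unfolding bounded_op_def by blast
  have "l2_norm (T x) \<le> max C 0 * l2_norm x" if "x \<in> l2" for x
  proof -
    have "C * l2_norm x \<le> max C 0 * l2_norm x" using that by (intro mult_right_mono) auto
    thus ?thesis using C that by auto
  qed
  thus ?thesis using that[of "max C 0"] by auto
qed

lemma bounded_op_vzero: "bounded_op T \<Longrightarrow> T vzero = vzero"
  using bounded_opD(4)[of T vzero 0] by simp

lemma op_norm_le:
  assumes "\<And>x. x \<in> l2 \<Longrightarrow> l2_norm (T x) \<le> B * l2_norm x" "B \<ge> 0"
  shows "op_norm T \<le> B"
  unfolding op_norm_def
proof (rule cSup_least)
  have "l2_norm (T vzero) \<in> {l2_norm (T x) | x. x \<in> l2 \<and> l2_norm x \<le> 1}"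
    by (intro CollectI exI[of _ vzero]) simp
  thus "{l2_norm (T x) | x. x \<in> l2 \<and> l2_norm x \<le> 1} \<noteq> {}"
    by (metis equals0D)
next
  fix r assume "r \<in> {l2_norm (T x) | x. x \<in> l2 \<and> l2_norm x \<le> 1}"
  then obtain x where x: "x \<in> l2" "l2_norm x \<le> 1" "r = l2_norm (T x)" by blast
  have "r \<le> B * l2_norm x" using assms(1)[OF x(1)] x(3) by simp
  also have "\<dots> \<le> B * 1" using x(2) assms(2) by (intro mult_left_mono) auto
  finally show "r \<le> B" by simp
qed

lemma op_norm_ge:
  assumes T: "bounded_op T" and x: "x \<in> l2" "l2_norm x \<le> 1"
  shows "l2_norm (T x) \<le> op_norm T"
proof -
  obtain C where C: "C \<ge> 0" "\<And>x. x \<in> l2 \<Longrightarrow> l2_norm (T x) \<le> C * l2_norm x"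
    using bounded_op_bound[OF T] by blast
  have "bdd_above {l2_norm (T x) | x. x \<in> l2 \<and> l2_norm x \<le> 1}"
  proof (rule bdd_aboveI)
    fix r assume "r \<in> {l2_norm (T x) | x. x \<in> l2 \<and> l2_norm x \<le> 1}"
    then obtain y where y: "y \<in> l2" "l2_norm y \<le> 1" "r = l2_norm (T y)" by blast
    have "r \<le> C * l2_norm y" using C(2)[OF y(1)] y(3) by simp
    also have "\<dots> \<le> C * 1" using y(2) C(1) by (intro mult_left_mono) auto
    finally show "r \<le> C" by simp
  qed
  thus ?thesis unfolding op_norm_def using x by (intro cSup_upper) auto
qed

lemma op_norm_nonneg: "bounded_op T \<Longrightarrow> op_norm T \<ge> 0"
  using op_norm_ge[of T vzero] bounded_op_vzero[of T] by simp

lemma op_norm_bound: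
  assumes T: "bounded_op T" and x: "x \<in> l2"
  shows "l2_norm (T x) \<le> op_norm T * l2_norm x"
proof (cases "l2_norm x = 0")
  case True
  hence "x = vzero" using l2_norm_zero_iff[OF x] by simp
  thus ?thesis using bounded_op_vzero[OF T] by simp
next
  case False
  hence pos: "l2_norm x > 0" using l2_norm_nonneg[OF x] by simp
  let ?u = "vscale (of_real (1 / l2_norm x)) x"
  have u: "?u \<in> l2" "l2_norm ?u \<le> 1" using x pos by (auto simp: l2_norm_vscale norm_divide)
  have "l2_norm (T ?u) = l2_norm (T x) / l2_norm x"
    using bounded_opD(4)[OF T x] bounded_opD(1)[OF T x] pos by (simp add: l2_norm_vscale norm_divide)
  hence "l2_norm (T x) / l2_norm x \<le> op_norm T" using op_norm_ge[OF T u] by simp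
  thus ?thesis using pos by (simp add: divide_le_eq)
qed

lemma bounded_op_opscale: "bounded_op T \<Longrightarrow> bounded_op (opscale c T)"
proof -
  assume T: "bounded_op T"
  obtain C where C: "C \<ge> 0" "\<And>x. x \<in> l2 \<Longrightarrow> l2_norm (T x) \<le> C * l2_norm x"
    using bounded_op_bound[OF T] by blast
  show ?thesis
  proof (rule bounded_opI[where C="cmod c * C"])
    fix x assume x: "x \<in> l2"
    show "opscale c T x \<in> l2" using bounded_opD(1)[OF T x] by (simp add: opscale_def)
    show "l2_norm (opscale c T x) \<le> cmod c * C * l2_norm x"
      using bounded_opD(1)[OF T x] C(2)[OF x]
      by (simp add: opscale_def l2_norm_vscale mult.assoc mult_left_mono)
  next
    fix x assume "x \<notin> l2" thus "opscale c T x = vzero" using bounded_opD(2)[OF T] by (simp add: opscale_def)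
  next
    fix x y assume "x \<in> l2" "y \<in> l2"
    thus "opscale c T (vadd x y) = vadd (opscale c T x) (opscale c T y)"
      using bounded_opD(3)[OF T] by (simp add: opscale_def vscale_vadd)
  next
    fix d x assume "x \<in> l2"
    thus "opscale c T (vscale d x) = vscale d (opscale c T x)"
      using bounded_opD(4)[OF T] by (simp add: opscale_def vscale_vscale mult.commute)
  qed
qed

lemma op_norm_opscale:
  assumes T: "bounded_op T"
  shows "op_norm (opscale c T) = cmod c * op_norm T"
proof (rule antisym)
  show "op_norm (opscale c T) \<le> cmod c * op_norm T"
  proof (rule op_norm_le)
    fix x assume x: "x \<in> l2"
    show "l2_norm (opscale c T x) \<le> cmod c * op_norm T * l2_norm x"
      using op_norm_bound[OF T x] bounded_opD(1)[OF T x]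
      by (simp add: opscale_def l2_norm_vscale mult.assoc mult_left_mono)
  qed (simp add: op_norm_nonneg[OF T])
next
  show "cmod c * op_norm T \<le> op_norm (opscale c T)"
  proof (cases "c = 0")
    case True thus ?thesis using op_norm_nonneg[OF bounded_op_opscale[OF T, of c]] by simp
  next
    case False
    hence cp: "cmod c > 0" by simp
    have "op_norm T \<le> op_norm (opscale c T) / cmod c"
    proof (rule op_norm_le)
      fix x assume x: "x \<in> l2"
      have "cmod c * l2_norm (T x) = l2_norm (opscale c T x)"
        using bounded_opD(1)[OF T x] by (simp add: opscale_def l2_norm_vscale)
      also have "\<dots> \<le> op_norm (opscale c T) * l2_norm x"
        by (rule op_norm_bound[OF bounded_op_opscale[OF T] x])
      finally show "l2_norm (T x) \<le> op_norm (opscale c T) / cmod c * l2_norm x"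
        using cp by (simp add: field_simps)
    qed (use op_norm_nonneg[OF bounded_op_opscale[OF T, of c]] cp in simp)
    thus ?thesis using cp by (simp add: field_simps)
  qed
qed

lemma bounded_op_comp:
  assumes a: "bounded_op a" and T: "bounded_op T"
  shows "bounded_op (a \<circ> T)"
proof -
  obtain C where C: "C \<ge> 0" "\<And>x. x \<in> l2 \<Longrightarrow> l2_norm (a x) \<le> C * l2_norm x"
    using bounded_op_bound[OF a] by blast
  obtain D where D: "D \<ge> 0" "\<And>x. x \<in> l2 \<Longrightarrow> l2_norm (T x) \<le> D * l2_norm x"
    using bounded_op_bound[OF T] by blast
  show ?thesis
  proof (rule bounded_opI[where C="C * D"])
    fix x assume x: "x \<in> l2"
    show "(a \<circ> T) x \<in> l2" using x bounded_opD(1)[OF a] bounded_opD(1)[OF T] by simp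
    have "l2_norm (a (T x)) \<le> C * l2_norm (T x)" using C(2) bounded_opD(1)[OF T x] by simp
    also have "\<dots> \<le> C * (D * l2_norm x)" using D(2)[OF x] C(1) by (rule mult_left_mono)
    finally show "l2_norm ((a \<circ> T) x) \<le> C * D * l2_norm x" by (simp add: mult.assoc)
  next
    fix x assume "x \<notin> l2" thus "(a \<circ> T) x = vzero"
      using bounded_opD(2)[OF T] bounded_op_vzero[OF a] by simp
  next
    fix x y assume "x \<in> l2" "y \<in> l2"
    thus "(a \<circ> T) (vadd x y) = vadd ((a \<circ> T) x) ((a \<circ> T) y)"
      using bounded_opD(3)[OF T] bounded_opD(3)[OF a] bounded_opD(1)[OF T] by simp
  next
    fix d x assume "x \<in> l2"
    thus "(a \<circ> T) (vscale d x) = vscale d ((a \<circ> T) x)"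
      using bounded_opD(4)[OF T] bounded_opD(4)[OF a] bounded_opD(1)[OF T] by simp
  qed
qed

lemma vdiff_scale: "vadd (vscale K u) (vscale (-1) (vscale K y)) = vscale K (vadd u (vscale (-1) y))"
  by (simp add: vscale_def vadd_def fun_eq_iff algebra_simps)

lemma compact_comp:
  assumes a: "compact_op a" and T: "bounded_op T"
  shows "compact_op (a \<circ> T)"
  unfolding compact_op_def
proof (intro conjI allI impI)
  have ab: "bounded_op a" using a by (simp add: compact_op_def)
  show "bounded_op (a \<circ> T)" by (rule bounded_op_comp[OF ab T])
  fix e :: real assume e: "e > 0"
  obtain C where C: "C \<ge> 0" "\<And>x. x \<in> l2 \<Longrightarrow> l2_norm (T x) \<le> C * l2_norm x"
    using bounded_op_bound[OF T] by blast
  define K where "K = C + 1"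
  have K: "K > 0" using C(1) by (simp add: K_def)
  have eK: "e / K > 0" using e K by simp
  have "\<exists>F. finite F \<and> F \<subseteq> l2 \<and> (\<forall>x\<in>l2. l2_norm x \<le> 1 \<longrightarrow>
          (\<exists>y\<in>F. l2_norm (vadd (a x) (vscale (- 1) y)) < e / K))"
    by (rule conjunct2[OF a[unfolded compact_op_def], rule_format, OF eK])
  then obtain F where F: "finite F" "F \<subseteq> l2"
    "\<And>x. x \<in> l2 \<Longrightarrow> l2_norm x \<le> 1 \<Longrightarrow> \<exists>y\<in>F. l2_norm (vadd (a x) (vscale (-1) y)) < e / K"
    by blast
  show "\<exists>F. finite F \<and> F \<subseteq> l2 \<and> (\<forall>x\<in>l2. l2_norm x \<le> 1 \<longrightarrow>
          (\<exists>y\<in>F. l2_norm (vadd ((a \<circ> T) x) (vscale (- 1) y)) < e))"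
  proof (intro exI[of _ "vscale (of_real K) ` F"] conjI ballI impI)
    show "finite (vscale (of_real K) ` F)" using F(1) by simp
    show "vscale (of_real K) ` F \<subseteq> l2" using F(2) by auto
    fix x assume x: "x \<in> l2" "l2_norm x \<le> 1"
    let ?u = "vscale (of_real (1 / K)) (T x)"
    have Tx: "T x \<in> l2" using bounded_opD(1)[OF T x(1)] .
    have u: "?u \<in> l2" using Tx by simp
    have "l2_norm ?u = l2_norm (T x) / K" using Tx K by (simp add: l2_norm_vscale norm_divide)
    also have "\<dots> \<le> C * l2_norm x / K" using C(2)[OF x(1)] K by (simp add: divide_right_mono)
    also have "\<dots> \<le> C * 1 / K" using x(2) C(1) K by (intro divide_right_mono mult_left_mono) auto
    also have "\<dots> \<le> 1" using K by (simp add: K_def)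
    finally have un: "l2_norm ?u \<le> 1" .
    obtain y where y: "y \<in> F" "l2_norm (vadd (a ?u) (vscale (-1) y)) < e / K"
      using F(3)[OF u un] by blast
    have Txe: "T x = vscale (of_real K) ?u" using K by (simp add: vscale_vscale)
    have aTx: "a (T x) = vscale (of_real K) (a ?u)"
      by (rule trans[OF arg_cong[of _ _ a, OF Txe] bounded_opD(4)[OF ab u]])
    have "l2_norm (vadd ((a \<circ> T) x) (vscale (- 1) (vscale (of_real K) y)))
        = l2_norm (vscale (of_real K) (vadd (a ?u) (vscale (-1) y)))"
      by (simp add: aTx vdiff_scale)
    also have "\<dots> = K * l2_norm (vadd (a ?u) (vscale (-1) y))"
      using K y(1) F(2) bounded_opD(1)[OF ab u] by (subst l2_norm_vscale) auto
    also have "\<dots> < K * (e / K)" by (rule mult_strict_left_mono[OF y(2) K])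
    also have "\<dots> = e" using K by simp
    finally show "\<exists>y\<in>vscale (of_real K) ` F. l2_norm (vadd ((a \<circ> T) x) (vscale (- 1) y)) < e"
      using y(1) by blast
  qed
qed

lemma compact_rank_one:
  assumes T: "bounded_op T" and u: "u \<in> l2"
    and R: "\<And>x. x \<in> l2 \<Longrightarrow> l2_norm x \<le> 1 \<Longrightarrow> \<exists>c. cmod c \<le> R \<and> T x = vscale c u"
  shows "compact_op T"
  unfolding compact_op_def
proof (intro conjI allI impI)
  show "bounded_op T" by (rule T)
  fix e :: real assume e: "e > 0"
  define d where "d = e / (l2_norm u + 1)"
  have d: "d > 0" using e l2_norm_nonneg[OF u] by (simp add: d_def)
  have cov: "cball 0 R \<subseteq> (\<Union>c\<in>cball (0::complex) R. ball c d)" using d by auto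
  obtain D where D: "D \<subseteq> cball (0::complex) R" "finite D" "cball 0 R \<subseteq> (\<Union>c\<in>D. ball c d)"
    by (rule compactE_image[OF compact_cball open_ball cov])
  show "\<exists>F. finite F \<and> F \<subseteq> l2 \<and> (\<forall>x\<in>l2. l2_norm x \<le> 1 \<longrightarrow>
          (\<exists>y\<in>F. l2_norm (vadd (T x) (vscale (- 1) y)) < e))"
  proof (intro exI[of _ "(\<lambda>c. vscale c u) ` D"] conjI ballI impI)
    show "finite ((\<lambda>c. vscale c u) ` D)" using D(2) by simp
    show "(\<lambda>c. vscale c u) ` D \<subseteq> l2" using u by auto
    fix x assume x: "x \<in> l2" "l2_norm x \<le> 1"
    obtain c where c: "cmod c \<le> R" "T x = vscale c u" using R[OF x] by blast
    have "c \<in> cball 0 R" using c(1) by simp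
    then obtain b where b: "b \<in> D" "c \<in> ball b d" using D(3) by blast
    have cb: "cmod (c - b) < d" using b(2) by (simp add: dist_norm norm_minus_commute)
    have "vadd (T x) (vscale (- 1) (vscale b u)) = vscale (c - b) u"
      by (simp add: c(2) vscale_def vadd_def fun_eq_iff algebra_simps)
    hence "l2_norm (vadd (T x) (vscale (- 1) (vscale b u))) = cmod (c - b) * l2_norm u"
      using u by (simp add: l2_norm_vscale)
    also have "\<dots> \<le> d * l2_norm u" using cb l2_norm_nonneg[OF u] by (intro mult_right_mono) auto
    also have "\<dots> < e"
    proof -
      have "d * l2_norm u = e * (l2_norm u / (l2_norm u + 1))" by (simp add: d_def)
      also have "\<dots> < e * 1" using e l2_norm_nonneg[OF u] by (intro mult_strict_left_mono) auto
      finally show ?thesis by simp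
    qed
    finally show "\<exists>y\<in>(\<lambda>c. vscale c u) ` D. l2_norm (vadd (T x) (vscale (- 1) y)) < e"
      using b(1) by blast
  qed
qed


lemma l2_inner_vzero_right[simp]: "l2_inner x vzero = 0"
  by (simp add: l2_inner_def vzero_def)

lemma rowop_l2: "x \<in> l2 \<Longrightarrow> rowop y x = vscale (l2_inner x y) (ebas 0)"
  by (simp add: rowop_def)
lemma colop_l2: "x \<in> l2 \<Longrightarrow> colop y x = vscale (x 0) y"
  by (simp add: colop_def)

lemma rowop_bounded:
  assumes y: "y \<in> l2" shows "bounded_op (rowop y)"
proof (rule bounded_opI[where C="l2_norm y"])
  fix x assume x: "x \<in> l2"
  show "rowop y x \<in> l2" using x by (simp add: rowop_l2)
  show "l2_norm (rowop y x) \<le> l2_norm y * l2_norm x"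
    using x cauchy_schwarz_l2[OF x y] by (simp add: rowop_l2 l2_norm_vscale mult.commute)
next
  fix x assume "x \<notin> l2" thus "rowop y x = vzero" by (simp add: rowop_def)
next
  fix x x' assume x: "x \<in> l2" "x' \<in> l2"
  thus "rowop y (vadd x x') = vadd (rowop y x) (rowop y x')"
    by (simp add: rowop_l2 l2_inner_vadd_left y vadd_scale_distrib)
next
  fix c x assume x: "x \<in> l2"
  thus "rowop y (vscale c x) = vscale c (rowop y x)"
    by (simp add: rowop_l2 l2_inner_vscale_left y vscale_vscale)
qed

lemma rowop_Kc: assumes y: "y \<in> l2" shows "rowop y \<in> Kc"
  unfolding Kc_def mem_Collect_eq
proof (rule compact_rank_one[OF rowop_bounded[OF y], where u="ebas 0" and R="l2_norm y"])
  fix x assume x: "x \<in> l2" "l2_norm x \<le> 1"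
  have "cmod (l2_inner x y) \<le> l2_norm x * l2_norm y" by (rule cauchy_schwarz_l2[OF x(1) y])
  also have "\<dots> \<le> 1 * l2_norm y" using x(2) l2_norm_nonneg[OF y] by (intro mult_right_mono) auto
  finally show "\<exists>c. cmod c \<le> l2_norm y \<and> rowop y x = vscale c (ebas 0)"
    using x(1) by (auto simp: rowop_l2)
qed simp

lemma colop_bounded:
  assumes y: "y \<in> l2" shows "bounded_op (colop y)"
proof (rule bounded_opI[where C="l2_norm y"])
  fix x assume x: "x \<in> l2"
  show "colop y x \<in> l2" using x y by (simp add: colop_l2)
  have "cmod (x 0) * l2_norm y \<le> l2_norm x * l2_norm y"
    using l2_coord_le[OF x, of 0] l2_norm_nonneg[OF y] by (rule mult_right_mono)
  thus "l2_norm (colop y x) \<le> l2_norm y * l2_norm x"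
    using x y by (simp add: colop_l2 l2_norm_vscale mult.commute)
next
  fix x assume "x \<notin> l2" thus "colop y x = vzero" by (simp add: colop_def)
next
  fix x x' assume x: "x \<in> l2" "x' \<in> l2"
  thus "colop y (vadd x x') = vadd (colop y x) (colop y x')"
    by (simp add: colop_l2 vadd_scale_distrib) (simp add: vadd_def)
next
  fix c x assume x: "x \<in> l2"
  thus "colop y (vscale c x) = vscale c (colop y x)"
    by (simp add: colop_l2 vscale_vscale) (simp add: vscale_def)
qed

lemma colop_Kc: assumes y: "y \<in> l2" shows "colop y \<in> Kc"
  unfolding Kc_def mem_Collect_eq
proof (rule compact_rank_one[OF colop_bounded[OF y], where u="y" and R="1"])
  fix x assume x: "x \<in> l2" "l2_norm x \<le> 1"
  have "cmod (x 0) \<le> 1" using l2_coord_le[OF x(1), of 0] x(2) by simp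
  thus "\<exists>c. cmod c \<le> 1 \<and> colop y x = vscale c y"
    using x(1) by (auto simp: colop_l2)
qed (rule y)

lemma zop_bounded: "bounded_op zop"
  by (rule bounded_opI[where C=0]) (auto simp: zop_def)

lemma zop_Kc: "zop \<in> Kc"
  unfolding Kc_def mem_Collect_eq
  by (rule compact_rank_one[OF zop_bounded, where u=vzero and R=0]) (auto simp: zop_def)

lemma rowop_vadd: "y \<in> l2 \<Longrightarrow> y' \<in> l2 \<Longrightarrow> rowop (vadd y y') = opadd (rowop y) (rowop y')"
  by (auto simp: fun_eq_iff rowop_def opadd_def l2_inner_vadd_right vadd_scale_distrib)

lemma rowop_vscale: "y \<in> l2 \<Longrightarrow> rowop (vscale c y) = opscale (cnj c) (rowop y)"
  by (auto simp: fun_eq_iff rowop_def opscale_def l2_inner_vscale_right vscale_vscale)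

lemma colop_vadd: "colop (vadd y y') = opadd (colop y) (colop y')"
  by (auto simp: fun_eq_iff colop_def opadd_def vscale_vadd)

lemma colop_vscale: "colop (vscale c y) = opscale c (colop y)"
  by (auto simp: fun_eq_iff colop_def opscale_def vscale_vscale mult.commute)

lemma rowop_comp:
  assumes a: "a \<in> Kc"
  shows "\<exists>z\<in>l2. rowop (ebas i) \<circ> a = rowop z"
proof -
  have ab: "bounded_op a" using a by (simp add: Kc_def compact_op_def)
  obtain C where C: "C \<ge> 0" "\<And>x. x \<in> l2 \<Longrightarrow> l2_norm (a x) \<le> C * l2_norm x"
    using bounded_op_bound[OF ab] by blast
  define g where "g x = a x i" for x
  have add: "g (vadd x y) = g x + g y" if "x \<in> l2" "y \<in> l2" for x y
    using bounded_opD(3)[OF ab that] by (simp add: g_def vadd_def)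
  have sc: "g (vscale c x) = c * g x" if "x \<in> l2" for c x
    using bounded_opD(4)[OF ab that] by (simp add: g_def vscale_def)
  have bd: "cmod (g x) \<le> C * l2_norm x" if "x \<in> l2" for x
    using l2_coord_le[OF bounded_opD(1)[OF ab that], of i] C(2)[OF that] by (simp add: g_def)
  define z where "z = (\<lambda>k. cnj (g (ebas k)))"
  have zl2: "z \<in> l2" unfolding z_def by (rule riesz(1)[OF add sc bd]) auto
  have gz: "g x = l2_inner x z" if "x \<in> l2" for x
    unfolding z_def by (rule riesz(2)[OF add sc bd]) (auto simp: that)
  have "rowop (ebas i) \<circ> a = rowop z"
  proof (rule ext)
    fix x show "(rowop (ebas i) \<circ> a) x = rowop z x"
    proof (cases "x \<in> l2")
      case True
      thus ?thesis using bounded_opD(1)[OF ab True] gz[OF True]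
        by (simp add: rowop_l2 g_def)
    next
      case False
      thus ?thesis using bounded_opD(2)[OF ab False] by (simp add: rowop_def, simp add: vzero_def)
    qed
  qed
  thus ?thesis using zl2 by blast
qed

lemma adj_char:
  assumes y: "y \<in> l2" and z: "z \<in> l2" and h: "\<And>x. x \<in> l2 \<Longrightarrow> l2_inner (T x) y = l2_inner x z"
  shows "adj T y = z"
proof -
  have "(THE z. z \<in> l2 \<and> (\<forall>x\<in>l2. l2_inner (T x) y = l2_inner x z)) = z"
  proof (rule the_equality)
    show "z \<in> l2 \<and> (\<forall>x\<in>l2. l2_inner (T x) y = l2_inner x z)" using z h by blast
  next
    fix z' assume z': "z' \<in> l2 \<and> (\<forall>x\<in>l2. l2_inner (T x) y = l2_inner x z')"
    have "cnj (z' k) = cnj (z k)" for k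
      using z' h[of "ebas k"] by simp
    thus "z' = z" by (simp add: fun_eq_iff)
  qed
  thus ?thesis using y by (simp add: adj_def)
qed

lemma adj_rowop:
  assumes y: "y \<in> l2" and w: "w \<in> l2"
  shows "adj (rowop y) w = vscale (w 0) y"
proof (rule adj_char[OF w])
  show "vscale (w 0) y \<in> l2" using y by simp
  fix x assume x: "x \<in> l2"
  show "l2_inner (rowop y x) w = l2_inner x (vscale (w 0) y)"
    using x y w by (simp add: rowop_l2 l2_inner_vscale_left l2_inner_vscale_right mult.commute)
qed

lemma adj_colop:
  assumes y: "y \<in> l2" and w: "w \<in> l2"
  shows "adj (colop y) w = vscale (l2_inner w y) (ebas 0)"
proof (rule adj_char[OF w])
  show "vscale (l2_inner w y) (ebas 0) \<in> l2" by simp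
  fix x assume x: "x \<in> l2"
  show "l2_inner (colop y x) w = l2_inner x (vscale (l2_inner w y) (ebas 0))"
    using x y w by (simp add: colop_l2 l2_inner_vscale_left l2_inner_vscale_right
        l2_inner_cnj[OF y w] mult.commute)
qed

lemma adj_zop: "w \<in> l2 \<Longrightarrow> adj zop w = vzero"
  by (rule adj_char) (auto simp: zop_def)

lemma zop_apply[simp]: "zop x = vzero" by (simp add: zop_def)

lemma opadd_zop_comp1: "opadd T (zop \<circ> S) = T"
  by (simp add: fun_eq_iff opadd_def zop_def)

lemma opadd_zop_comp2: "opadd T (adj zop \<circ> zop) = T"
  by (simp add: fun_eq_iff opadd_def adj_zop)

lemma rank_one_bound:
  assumes y: "y \<in> l2" "l2_norm y \<le> 1" and w: "w \<in> l2"
  shows "l2_norm (vscale (w 0 * of_real ((l2_norm y)\<^sup>2)) (ebas 0)) \<le> 1 * l2_norm w"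
proof -
  have "l2_norm (vscale (w 0 * of_real ((l2_norm y)\<^sup>2)) (ebas 0)) = cmod (w 0) * (l2_norm y)\<^sup>2"
    by (simp add: l2_norm_vscale norm_mult norm_power)
  also have "\<dots> \<le> l2_norm w * 1"
    using l2_coord_le[OF w, of 0] y l2_norm_nonneg[OF y(1)] l2_norm_nonneg[OF w]
    by (intro mult_mono) (auto simp: power_le_one)
  finally show ?thesis by simp
qed

lemma row_convex_norm:
  assumes y: "y \<in> l2" "l2_norm y \<le> 1"
  shows "op_norm (opadd (rowop y \<circ> adj (rowop y)) (zop \<circ> adj zop)) \<le> 1"
  unfolding opadd_zop_comp1
proof (rule op_norm_le)
  fix w assume w: "w \<in> l2"
  have "(rowop y \<circ> adj (rowop y)) w = vscale (w 0 * of_real ((l2_norm y)\<^sup>2)) (ebas 0)"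
    using y w by (simp add: adj_rowop rowop_l2 l2_inner_vscale_left l2_inner_self)
  thus "l2_norm ((rowop y \<circ> adj (rowop y)) w) \<le> 1 * l2_norm w"
    using rank_one_bound[OF y w] by simp
qed simp

lemma col_convex_norm:
  assumes y: "y \<in> l2" "l2_norm y \<le> 1"
  shows "op_norm (opadd (adj (colop y) \<circ> colop y) (adj zop \<circ> zop)) \<le> 1"
  unfolding opadd_zop_comp2
proof (rule op_norm_le)
  fix w assume w: "w \<in> l2"
  have "(adj (colop y) \<circ> colop y) w = vscale (w 0 * of_real ((l2_norm y)\<^sup>2)) (ebas 0)"
    using y w by (simp add: adj_colop colop_l2 l2_inner_vscale_left l2_inner_self)
  thus "l2_norm ((adj (colop y) \<circ> colop y) w) \<le> 1 * l2_norm w"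
    using rank_one_bound[OF y w] by simp
qed simp


locale cvs =
  fixes C :: "'v set" and p :: "'v \<Rightarrow> 'v \<Rightarrow> 'v" and s :: "complex \<Rightarrow> 'v \<Rightarrow> 'v" and z :: 'v
  assumes zC[simp]: "z \<in> C"
    and pC[simp]: "\<And>v w. v \<in> C \<Longrightarrow> w \<in> C \<Longrightarrow> p v w \<in> C"
    and sC[simp]: "\<And>c v. v \<in> C \<Longrightarrow> s c v \<in> C"
    and assoc: "\<And>u v w. u \<in> C \<Longrightarrow> v \<in> C \<Longrightarrow> w \<in> C \<Longrightarrow> p (p u v) w = p u (p v w)"
    and comm: "\<And>v w. v \<in> C \<Longrightarrow> w \<in> C \<Longrightarrow> p v w = p w v"
    and zl[simp]: "\<And>v. v \<in> C \<Longrightarrow> p z v = v"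
    and inv: "\<And>v. v \<in> C \<Longrightarrow> p v (s (-1) v) = z"
    and sdist: "\<And>c v w. v \<in> C \<Longrightarrow> w \<in> C \<Longrightarrow> s c (p v w) = p (s c v) (s c w)"
    and sadd: "\<And>c d v. v \<in> C \<Longrightarrow> s (c + d) v = p (s c v) (s d v)"
    and smul[simp]: "\<And>c d v. v \<in> C \<Longrightarrow> s c (s d v) = s (c * d) v"
    and sone[simp]: "\<And>v. v \<in> C \<Longrightarrow> s 1 v = v"
begin

lemma lcomm: "u \<in> C \<Longrightarrow> v \<in> C \<Longrightarrow> w \<in> C \<Longrightarrow> p u (p v w) = p v (p u w)"
  by (metis assoc comm)

lemmas ac = assoc comm lcomm

lemma zr[simp]: "v \<in> C \<Longrightarrow> p v z = v"
  using comm[of v z] by simp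

lemma inv2: "v \<in> C \<Longrightarrow> p (s (-1) v) v = z"
  using comm[of v "s (-1) v"] inv[of v] by simp

lemma idem_zero: assumes x: "x \<in> C" and e: "p x x = x" shows "x = z"
proof -
  have "z = p x (s (-1) x)" using inv[OF x] by simp
  also have "\<dots> = p (p x x) (s (-1) x)" using e by simp
  also have "\<dots> = p x (p x (s (-1) x))" using x by (simp add: assoc)
  also have "\<dots> = x" using x by (simp add: inv)
  finally show ?thesis by simp
qed

lemma s0[simp]: "v \<in> C \<Longrightarrow> s 0 v = z"
  using sadd[of v 0 0] idem_zero[of "s 0 v"] by simp

lemma sz[simp]: "s c z = z"
  using smul[of z c 0] s0[of z] by simp

lemma add_neg_eq: assumes u: "u \<in> C" and v: "v \<in> C" and e: "p u v = z" shows "v = s (-1) u"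
proof -
  have "v = p (p (s (-1) u) u) v" using inv2[OF u] v by simp
  also have "\<dots> = p (s (-1) u) (p u v)" using u v by (simp add: assoc)
  also have "\<dots> = s (-1) u" using e u by simp
  finally show ?thesis .
qed

lemma sub_zero_eq: assumes a: "a \<in> C" and b: "b \<in> C" and e: "p a (s (-1) b) = z" shows "a = b"
proof -
  have "s (-1) b = s (-1) a" using add_neg_eq[OF a _ e] b by simp
  hence "s (-1) (s (-1) b) = s (-1) (s (-1) a)" by simp
  thus ?thesis using a b by simp
qed

lemma sadd': "v \<in> C \<Longrightarrow> p (s c v) (s d v) = s (c + d) v"
  using sadd by simp

end

lemma complex_vs_cvs:
  assumes "complex_vs M"
  shows "cvs (kcarrier M) (kplus M) (kscale M) (kzero M)"
proof -
  note a = assms[unfolded complex_vs_def Let_def]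
  note a0 = a[THEN conjunct1]
  note a1 = a[THEN conjunct2, THEN conjunct1]
  note a2 = a[THEN conjunct2, THEN conjunct2, THEN conjunct1]
  note a3 = a[THEN conjunct2, THEN conjunct2, THEN conjunct2, THEN conjunct1]
  note a4 = a[THEN conjunct2, THEN conjunct2, THEN conjunct2, THEN conjunct2, THEN conjunct1]
  note a5 = a[THEN conjunct2, THEN conjunct2, THEN conjunct2, THEN conjunct2, THEN conjunct2, THEN conjunct1]
  note a6 = a[THEN conjunct2, THEN conjunct2, THEN conjunct2, THEN conjunct2, THEN conjunct2, THEN conjunct2, THEN conjunct1]
  note a7 = a[THEN conjunct2, THEN conjunct2, THEN conjunct2, THEN conjunct2, THEN conjunct2, THEN conjunct2, THEN conjunct2, THEN conjunct1]
  note a8 = a[THEN conjunct2, THEN conjunct2, THEN conjunct2, THEN conjunct2, THEN conjunct2, THEN conjunct2, THEN conjunct2, THEN conjunct2, THEN conjunct1]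
  note a9 = a[THEN conjunct2, THEN conjunct2, THEN conjunct2, THEN conjunct2, THEN conjunct2, THEN conjunct2, THEN conjunct2, THEN conjunct2, THEN conjunct2, THEN conjunct1]
  note a10 = a[THEN conjunct2, THEN conjunct2, THEN conjunct2, THEN conjunct2, THEN conjunct2, THEN conjunct2, THEN conjunct2, THEN conjunct2, THEN conjunct2, THEN conjunct2]
  show ?thesis
    apply unfold_locales
    using a0 apply blast
    using a1 apply blast
    using a2 apply blast
    using a3 apply blast
    using a4 apply blast
    using a5 apply blast
    using a6 apply blast
    using a7 apply blast
    using a8 apply blast
    using a9 apply blast
    using a10 by blast
qed

locale cvs_hb = cvs +
  fixes q :: "'v \<Rightarrow> real"
  assumes q_nonneg: "\<And>v. v \<in> C \<Longrightarrow> q v \<ge> 0"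
    and q_tri: "\<And>v w. v \<in> C \<Longrightarrow> w \<in> C \<Longrightarrow> q (p v w) \<le> q v + q w"
    and q_scale: "\<And>c v. v \<in> C \<Longrightarrow> q (s c v) = cmod c * q v"
begin

definition good :: "'v set \<Rightarrow> ('v \<Rightarrow> real) \<Rightarrow> ('v \<times> real) set \<Rightarrow> bool" where
  "good V g H \<longleftrightarrow>
     (\<forall>x a b. (x, a) \<in> H \<longrightarrow> (x, b) \<in> H \<longrightarrow> a = b) \<and>
     (\<forall>x a. (x, a) \<in> H \<longrightarrow> x \<in> C \<and> a \<le> q x) \<and>
     (\<forall>v\<in>V. (v, g v) \<in> H) \<and>
     (\<forall>x a y b. (x, a) \<in> H \<longrightarrow> (y, b) \<in> H \<longrightarrow> (p x y, a + b) \<in> H) \<and>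
     (\<forall>x a t. (x, a) \<in> H \<longrightarrow> (s (of_real t) x, t * a) \<in> H)"

end

context cvs_hb
begin

lemma goodD:
  assumes "good V g H"
  shows "\<And>x a b. (x, a) \<in> H \<Longrightarrow> (x, b) \<in> H \<Longrightarrow> a = b"
    "\<And>x a. (x, a) \<in> H \<Longrightarrow> x \<in> C" "\<And>x a. (x, a) \<in> H \<Longrightarrow> a \<le> q x"
    "\<And>v. v \<in> V \<Longrightarrow> (v, g v) \<in> H"
    "\<And>x a y b. (x, a) \<in> H \<Longrightarrow> (y, b) \<in> H \<Longrightarrow> (p x y, a + b) \<in> H"
    "\<And>x a t. (x, a) \<in> H \<Longrightarrow> (s (of_real t) x, t * a) \<in> H"
  using assms unfolding good_def by blast+

lemma good_zero:
  assumes G: "good V g H" and zV: "z \<in> V"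
  shows "(z, 0) \<in> H"
  using goodD(6)[OF G goodD(4)[OF G zV], of 0] by simp

lemma sum_identity:
  assumes "x \<in> C" "y \<in> C" "w \<in> C"
  shows "p (p x (s (of_real t) w)) (p y (s (of_real r) w)) = p (p x y) (s (of_real (t + r)) w)"
proof -
  have "p (p x (s (of_real t) w)) (p y (s (of_real r) w)) = p (p x y) (p (s (of_real t) w) (s (of_real r) w))"
    using assms by (simp add: assoc lcomm)
  also have "p (s (of_real t) w) (s (of_real r) w) = s (of_real (t + r)) w"
    using assms by (simp add: sadd')
  finally show ?thesis .
qed

lemma scale_identity:
  assumes "x \<in> C" "w \<in> C"
  shows "s (of_real u) (p x (s (of_real t) w)) = p (s (of_real u) x) (s (of_real (u * t)) w)"
  using assms by (simp add: sdist)

lemma diff_identity: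
  assumes x: "x \<in> C" and x': "x' \<in> C" and w: "w \<in> C"
    and e: "p x (s (of_real t) w) = p x' (s (of_real t') w)"
  shows "p (p x (s (-1) x')) (s (of_real (t - t')) w) = z"
proof -
  let ?R = "p x' (s (of_real t') w)"
  have "z = p ?R (s (-1) ?R)" using inv x' w by simp
  also have "s (-1) ?R = p (s (-1) x') (s (of_real (- t')) w)" using x' w by (simp add: sdist)
  also have "p ?R (p (s (-1) x') (s (of_real (- t')) w)) = p (p x (s (of_real t) w)) (p (s (-1) x') (s (of_real (- t')) w))"
    using e by simp
  also have "\<dots> = p (p x (s (-1) x')) (p (s (of_real t) w) (s (of_real (- t')) w))"
    using x x' w by (simp add: assoc lcomm)
  also have "p (s (of_real t) w) (s (of_real (- t')) w) = s (of_real (t - t')) w"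
    using w by (simp add: sadd')
  finally show ?thesis by simp
qed

lemma ext_step:
  assumes G: "good V g M" and zV: "z \<in> V" and w0: "w0 \<in> C" and nw: "\<And>a. (w0, a) \<notin> M"
  shows "\<exists>M'. good V g M' \<and> M \<subseteq> M' \<and> M' \<noteq> M"
proof -
  note fM = goodD(1)[OF G] and cM = goodD(2)[OF G] and bM = goodD(3)[OF G]
    and vM = goodD(4)[OF G] and aM = goodD(5)[OF G] and sM = goodD(6)[OF G]
  have z0: "(z, 0) \<in> M" by (rule good_zero[OF G zV])
  define L where "L = {b - q (p y (s (-1) w0)) | y b. (y, b) \<in> M}"
  define c where "c = Sup L"
  have key: "b - q (p y (s (-1) w0)) \<le> q (p y' w0) - b'" if yb: "(y, b) \<in> M" "(y', b') \<in> M" for y b y' b'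
  proof -
    have y: "y \<in> C" "y' \<in> C" using cM yb by auto
    have "b + b' \<le> q (p y y')" using bM[OF aM[OF yb]] .
    also have "p y y' = p (p y (s (-1) w0)) (p y' w0)"
    proof -
      have "p (p y (s (-1) w0)) (p y' w0) = p (p y y') (p (s (-1) w0) w0)"
        using y w0 by (simp add: assoc lcomm)
      thus ?thesis using y w0 by (simp add: inv2)
    qed
    also have "q \<dots> \<le> q (p y (s (-1) w0)) + q (p y' w0)" using y w0 by (intro q_tri) auto
    finally show ?thesis by simp
  qed
  have Lne: "L \<noteq> {}" using z0 unfolding L_def by blast
  have Lbdd: "bdd_above L"
    unfolding L_def by (rule bdd_aboveI[where M="q (p z w0)"]) (auto dest!: key[OF _ z0])
  have lower: "b - q (p y (s (-1) w0)) \<le> c" if "(y, b) \<in> M" for y b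
    unfolding c_def by (rule cSup_upper[OF _ Lbdd]) (use that in \<open>auto simp: L_def\<close>)
  have upper: "c \<le> q (p y w0) - b" if "(y, b) \<in> M" for y b
    unfolding c_def by (rule cSup_least[OF Lne]) (auto simp: L_def intro: key[OF _ that])
  define M' where "M' = {(p x (s (of_real t) w0), a + t * c) | x a t. (x, a) \<in> M}"
  have M'I: "(p x (s (of_real t) w0), a + t * c) \<in> M'" if "(x, a) \<in> M" for x a t
    using that unfolding M'_def by blast
  have M'E: "\<exists>x a t. (x, a) \<in> M \<and> y = p x (s (of_real t) w0) \<and> b = a + t * c" if "(y, b) \<in> M'" for y b
    using that unfolding M'_def by blast
  have good': "good V g M'"
    unfolding good_def
  proof (intro conjI allI impI ballI)
    fix y b b' assume yb: "(y, b) \<in> M'" "(y, b') \<in> M'"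
    obtain x a t where xat: "(x, a) \<in> M" "y = p x (s (of_real t) w0)" "b = a + t * c" using M'E[OF yb(1)] by blast
    obtain x' a' t' where xat': "(x', a') \<in> M" "y = p x' (s (of_real t') w0)" "b' = a' + t' * c" using M'E[OF yb(2)] by blast
    have x: "x \<in> C" "x' \<in> C" using cM xat(1) xat'(1) by auto
    have e: "p x (s (of_real t) w0) = p x' (s (of_real t') w0)" using xat(2) xat'(2) by simp
    have d: "p (p x (s (-1) x')) (s (of_real (t - t')) w0) = z" by (rule diff_identity[OF x w0 e])
    let ?u = "p x (s (-1) x')"
    have uM: "(?u, a + (-1) * a') \<in> M" using aM[OF xat(1) sM[OF xat'(1), of "-1"]] by simp
    have u: "?u \<in> C" using x by simp
    have tt: "t = t'"
    proof (rule ccontr)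
      assume ne: "t \<noteq> t'"
      have "s (of_real (t - t')) w0 = s (-1) ?u" by (rule add_neg_eq[OF u _ d]) (simp add: w0)
      hence "s (of_real (1 / (t - t'))) (s (of_real (t - t')) w0) = s (of_real (1 / (t - t'))) (s (-1) ?u)"
        by simp
      hence "w0 = s (of_real (- 1 / (t - t'))) ?u" using ne w0 u by (simp add: field_simps)
      moreover have "(s (of_real (- 1 / (t - t'))) ?u, (- 1 / (t - t')) * (a + (-1) * a')) \<in> M"
        by (rule sM[OF uM])
      ultimately show False using nw by metis
    qed
    have "?u = z" using d tt w0 u by simp
    hence "x = x'" using sub_zero_eq x by blast
    hence "a = a'" using fM xat(1) xat'(1) by blast
    thus "b = b'" using xat(3) xat'(3) tt by simp
  next
    fix y b assume yb: "(y, b) \<in> M'"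
    obtain x a t where xat: "(x, a) \<in> M" "y = p x (s (of_real t) w0)" "b = a + t * c" using M'E[OF yb] by blast
    have x: "x \<in> C" using cM xat(1) by auto
    show "y \<in> C" using xat(2) x w0 by simp
    show "b \<le> q y"
    proof (cases "t = 0")
      case True thus ?thesis using xat bM[OF xat(1)] x w0 by simp
    next
      case False
      show ?thesis
      proof (cases "t > 0")
        case True
        let ?x = "s (of_real (1 / t)) x"
        have xM: "(?x, (1 / t) * a) \<in> M" by (rule sM[OF xat(1)])
        have "c \<le> q (p ?x w0) - (1 / t) * a" by (rule upper[OF xM])
        hence "t * c \<le> t * (q (p ?x w0) - (1 / t) * a)" using True by simp
        also have "\<dots> = t * q (p ?x w0) - a" using True by (simp add: algebra_simps)
        also have "t * q (p ?x w0) = q (s (of_real t) (p ?x w0))" using q_scale x w0 True by simp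
        also have "s (of_real t) (p ?x w0) = y" using x w0 True xat(2) by (simp add: sdist)
        finally show ?thesis using xat(3) by simp
      next
        case False
        hence tn: "t < 0" using \<open>t \<noteq> 0\<close> by simp
        let ?x = "s (of_real (- 1 / t)) x"
        have xM: "(?x, (- 1 / t) * a) \<in> M" by (rule sM[OF xat(1)])
        define Q where "Q = q (p ?x (s (-1) w0))"
        have "(- 1 / t) * a - Q \<le> c" unfolding Q_def by (rule lower[OF xM])
        hence "(- t) * ((- 1 / t) * a - Q) \<le> (- t) * c" using tn by (intro mult_left_mono) auto
        moreover have "(- t) * ((- 1 / t) * a - Q) = a - (- t) * Q" using tn by (simp add: field_simps)
        ultimately have h2: "a - (- t) * Q \<le> (- t) * c" by simp
        have "(- t) * Q = q (s (of_real (- t)) (p ?x (s (-1) w0)))"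
          unfolding Q_def using q_scale x w0 tn by simp
        also have "s (of_real (- t)) (p ?x (s (-1) w0)) = y" using x w0 tn xat(2) by (simp add: sdist)
        finally have "(- t) * Q = q y" .
        thus ?thesis using xat(3) h2 by (simp add: algebra_simps)
      qed
    qed
  next
    fix v assume v: "v \<in> V"
    have "(p v (s (of_real 0) w0), g v + 0 * c) \<in> M'" by (rule M'I[OF vM[OF v]])
    thus "(v, g v) \<in> M'" using cM[OF vM[OF v]] w0 by simp
  next
    fix y b y' b' assume yb: "(y, b) \<in> M'" "(y', b') \<in> M'"
    obtain x a t where xat: "(x, a) \<in> M" "y = p x (s (of_real t) w0)" "b = a + t * c" using M'E[OF yb(1)] by blast
    obtain x' a' t' where xat': "(x', a') \<in> M" "y' = p x' (s (of_real t') w0)" "b' = a' + t' * c" using M'E[OF yb(2)] by blast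
    have x: "x \<in> C" "x' \<in> C" using cM xat(1) xat'(1) by auto
    have "(p (p x x') (s (of_real (t + t')) w0), (a + a') + (t + t') * c) \<in> M'"
      by (rule M'I[OF aM[OF xat(1) xat'(1)]])
    thus "(p y y', b + b') \<in> M'" using sum_identity[OF x w0, of t t'] xat xat'
      by (simp add: algebra_simps)
  next
    fix y b u assume yb: "(y, b) \<in> M'"
    obtain x a t where xat: "(x, a) \<in> M" "y = p x (s (of_real t) w0)" "b = a + t * c" using M'E[OF yb] by blast
    have x: "x \<in> C" using cM xat(1) by auto
    have "(p (s (of_real u) x) (s (of_real (u * t)) w0), u * a + (u * t) * c) \<in> M'"
      by (rule M'I[OF sM[OF xat(1)]])
    thus "(s (of_real u) y, u * b) \<in> M'" using scale_identity[OF x w0, of u t] xat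
      by (simp add: algebra_simps)
  qed
  have sub: "M \<subseteq> M'"
  proof
    fix xa assume "xa \<in> M"
    then obtain x a where xa: "xa = (x, a)" "(x, a) \<in> M" by (cases xa) auto
    have "(p x (s (of_real 0) w0), a + 0 * c) \<in> M'" by (rule M'I[OF xa(2)])
    thus "xa \<in> M'" using xa cM[OF xa(2)] w0 by simp
  qed
  have "(p z (s (of_real 1) w0), 0 + 1 * c) \<in> M'" by (rule M'I[OF z0])
  hence "(w0, c) \<in> M'" using w0 by simp
  hence "M' \<noteq> M" using nw by blast
  thus ?thesis using good' sub by blast
qed

lemma real_hb:
  assumes VC: "V \<subseteq> C" and zV: "z \<in> V"
    and Vp: "\<And>v w. v \<in> V \<Longrightarrow> w \<in> V \<Longrightarrow> p v w \<in> V"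
    and Vs: "\<And>c v. v \<in> V \<Longrightarrow> s c v \<in> V"
    and gadd: "\<And>v w. v \<in> V \<Longrightarrow> w \<in> V \<Longrightarrow> g (p v w) = g v + g w"
    and gsc: "\<And>t v. v \<in> V \<Longrightarrow> g (s (of_real t) v) = t * g v"
    and gq: "\<And>v. v \<in> V \<Longrightarrow> g v \<le> q v"
  shows "\<exists>G. (\<forall>v\<in>V. G v = g v) \<and> (\<forall>v\<in>C. \<forall>w\<in>C. G (p v w) = G v + G w)
            \<and> (\<forall>t. \<forall>v\<in>C. G (s (of_real t) v) = t * G v) \<and> (\<forall>v\<in>C. G v \<le> q v)"
proof -
  define H0 where "H0 = {(v, g v) | v. v \<in> V}"
  have H0: "good V g H0"
    unfolding good_def H0_def using VC gq
    by (auto simp: gadd gsc Vp Vs simp del: of_real_minus)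
  define A where "A = {H. good V g H}"
  have "\<exists>M\<in>A. \<forall>X\<in>A. M \<subseteq> X \<longrightarrow> X = M"
  proof (rule Zorn_Lemma2, rule ballI)
    fix Ch assume Ch: "Ch \<in> chains A"
    show "\<exists>U\<in>A. \<forall>X\<in>Ch. X \<subseteq> U"
    proof (cases "Ch = {}")
      case True thus ?thesis using H0 unfolding A_def by blast
    next
      case False
      then obtain H1 where H1: "H1 \<in> Ch" by blast
      have gCh: "good V g H" if "H \<in> Ch" for H using chainsD2[OF Ch] that unfolding A_def by blast
      have cmp: "H \<subseteq> H' \<or> H' \<subseteq> H" if "H \<in> Ch" "H' \<in> Ch" for H H' using chainsD[OF Ch that] .
      have "good V g (\<Union>Ch)"
        unfolding good_def
      proof (intro conjI allI impI ballI)
        fix x a b assume "(x, a) \<in> \<Union>Ch" "(x, b) \<in> \<Union>Ch"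
        then obtain H H' where "H \<in> Ch" "H' \<in> Ch" "(x, a) \<in> H" "(x, b) \<in> H'" by blast
        thus "a = b" using cmp gCh goodD(1) by (metis subsetD)
      next
        fix x a assume "(x, a) \<in> \<Union>Ch"
        then obtain H where "H \<in> Ch" "(x, a) \<in> H" by blast
        thus "x \<in> C" using gCh goodD(2) by blast
      next
        fix x a assume "(x, a) \<in> \<Union>Ch"
        then obtain H where "H \<in> Ch" "(x, a) \<in> H" by blast
        thus "a \<le> q x" using gCh goodD(3) by blast
      next
        fix v assume "v \<in> V" thus "(v, g v) \<in> \<Union>Ch" using H1 gCh goodD(4) by blast
      next
        fix x a y b assume "(x, a) \<in> \<Union>Ch" "(y, b) \<in> \<Union>Ch"
        then obtain H H' where HH: "H \<in> Ch" "H' \<in> Ch" "(x, a) \<in> H" "(y, b) \<in> H'" by blast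
        show "(p x y, a + b) \<in> \<Union>Ch"
        proof (cases "H \<subseteq> H'")
          case True thus ?thesis using HH gCh goodD(5) by blast
        next
          case False hence "H' \<subseteq> H" using cmp HH by blast
          thus ?thesis using HH gCh goodD(5) by blast
        qed
      next
        fix x a t assume "(x, a) \<in> \<Union>Ch"
        then obtain H where "H \<in> Ch" "(x, a) \<in> H" by blast
        thus "(s (of_real t) x, t * a) \<in> \<Union>Ch" using gCh goodD(6) by blast
      qed
      thus ?thesis unfolding A_def by blast
    qed
  qed
  then obtain M where M: "good V g M" and Mmax: "\<And>X. good V g X \<Longrightarrow> M \<subseteq> X \<Longrightarrow> X = M"
    unfolding A_def by blast
  have tot: "\<exists>a. (x, a) \<in> M" if x: "x \<in> C" for x
  proof (rule ccontr)
    assume "\<not> (\<exists>a. (x, a) \<in> M)"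
    then obtain M' where "good V g M'" "M \<subseteq> M'" "M' \<noteq> M" using ext_step[OF M zV x] by blast
    thus False using Mmax by blast
  qed
  define G where "G x = (THE a. (x, a) \<in> M)" for x
  have GM: "(x, G x) \<in> M" if xC: "x \<in> C" for x
  proof -
    obtain a where a: "(x, a) \<in> M" using tot[OF xC] by blast
    have "G x = a" unfolding G_def
    proof (rule the_equality)
      show "(x, a) \<in> M" by (rule a)
      fix b assume "(x, b) \<in> M" thus "b = a" using goodD(1)[OF M] a by blast
    qed
    thus ?thesis using a by simp
  qed
  have Geq: "G x = a" if "(x, a) \<in> M" for x a
    using goodD(1)[OF M GM[OF goodD(2)[OF M that]] that] .
  show ?thesis
  proof (intro exI conjI ballI allI)
    fix v assume "v \<in> V" thus "G v = g v" using Geq goodD(4)[OF M] by blast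
  next
    fix v w assume "v \<in> C" "w \<in> C"
    thus "G (p v w) = G v + G w" using Geq goodD(5)[OF M GM GM] by blast
  next
    fix t v assume "v \<in> C"
    thus "G (s (of_real t) v) = t * G v" using Geq goodD(6)[OF M GM] by blast
  next
    fix v assume "v \<in> C" thus "G v \<le> q v" using goodD(3)[OF M GM] by blast
  qed
qed

end


lemma cnj_sgn_mult: "cnj (sgn x) * x = complex_of_real (cmod x)"
proof (cases "x = 0")
  case True thus ?thesis by simp
next
  case False
  have "cnj (sgn x) * x = cnj x * x / complex_of_real (cmod x)"
    by (simp add: sgn_div_norm divide_inverse scaleR_conv_of_real)
  also have "cnj x * x = complex_of_real ((cmod x)\<^sup>2)" by (rule cnj_mult_self)
  finally show ?thesis using False by (simp add: power2_eq_square)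
qed

context cvs_hb
begin

lemma complex_hb:
  assumes VC: "V \<subseteq> C" and zV: "z \<in> V"
    and Vp: "\<And>v w. v \<in> V \<Longrightarrow> w \<in> V \<Longrightarrow> p v w \<in> V"
    and Vs: "\<And>c v. v \<in> V \<Longrightarrow> s c v \<in> V"
    and fadd: "\<And>v w. v \<in> V \<Longrightarrow> w \<in> V \<Longrightarrow> f (p v w) = f v + f w"
    and fsc: "\<And>c v. v \<in> V \<Longrightarrow> f (s c v) = c * f v"
    and fq: "\<And>v. v \<in> V \<Longrightarrow> cmod (f v) \<le> q v"
  shows "\<exists>F. (\<forall>v\<in>V. F v = f v) \<and> (\<forall>v\<in>C. \<forall>w\<in>C. F (p v w) = F v + F w)
            \<and> (\<forall>c. \<forall>v\<in>C. F (s c v) = c * F v) \<and> (\<forall>v\<in>C. cmod (F v) \<le> q v)"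
proof -
  have "\<exists>G. (\<forall>v\<in>V. G v = Re (f v)) \<and> (\<forall>v\<in>C. \<forall>w\<in>C. G (p v w) = G v + G w)
            \<and> (\<forall>t. \<forall>v\<in>C. G (s (of_real t) v) = t * G v) \<and> (\<forall>v\<in>C. G v \<le> q v)"
  proof (rule real_hb[OF VC zV Vp Vs])
    fix v w assume "v \<in> V" "w \<in> V" thus "Re (f (p v w)) = Re (f v) + Re (f w)" by (simp add: fadd)
  next
    fix t v assume "v \<in> V" thus "Re (f (s (of_real t) v)) = t * Re (f v)" by (simp add: fsc)
  next
    fix v assume "v \<in> V" thus "Re (f v) \<le> q v" using fq complex_Re_le_cmod order_trans by blast
  qed
  then obtain G where Gext: "\<And>v. v \<in> V \<Longrightarrow> G v = Re (f v)"
    and Gadd: "\<And>v w. v \<in> C \<Longrightarrow> w \<in> C \<Longrightarrow> G (p v w) = G v + G w"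
    and Gsc: "\<And>t v. v \<in> C \<Longrightarrow> G (s (of_real t) v) = t * G v"
    and Gq: "\<And>v. v \<in> C \<Longrightarrow> G v \<le> q v" by blast
  define F where "F v = complex_of_real (G v) - \<i> * complex_of_real (G (s \<i> v))" for v
  have ReF: "Re (F v) = G v" for v by (simp add: F_def)
  have Gsc2: "G (s c w) = Re c * G w + Im c * G (s \<i> w)" if w: "w \<in> C" for c w
  proof -
    have "s c w = p (s (of_real (Re c)) w) (s (of_real (Im c)) (s \<i> w))"
    proof -
      have "p (s (of_real (Re c)) w) (s (of_real (Im c)) (s \<i> w))
          = s (of_real (Re c) + of_real (Im c) * \<i>) w" using w by (simp add: sadd')
      also have "of_real (Re c) + of_real (Im c) * \<i> = c" by (simp add: complex_eq_iff)
      finally show ?thesis by simp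
    qed
    hence "G (s c w) = G (s (of_real (Re c)) w) + G (s (of_real (Im c)) (s \<i> w))"
      using Gadd[OF sC[OF w] sC[OF sC[OF w]]] by (simp only:)
    also have "\<dots> = Re c * G w + Im c * G (s \<i> w)"
      using Gsc[OF w, of "Re c"] Gsc[OF sC[OF w], of "Im c"] by (simp only:)
    finally show ?thesis .
  qed
  have Fsc: "F (s c v) = c * F v" if v: "v \<in> C" for c v
  proof -
    have "G (s \<i> (s c v)) = G (s (\<i> * c) v)" using v by simp
    also have "\<dots> = - Im c * G v + Re c * G (s \<i> v)" using Gsc2[OF v, of "\<i> * c"] by simp
    finally have h: "G (s \<i> (s c v)) = - Im c * G v + Re c * G (s \<i> v)" .
    show "F (s c v) = c * F v"
      unfolding F_def h Gsc2[OF v, of c] by (simp add: complex_eq_iff algebra_simps)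
  qed
  show ?thesis
  proof (intro exI[of _ F] conjI ballI allI)
    fix v assume v: "v \<in> V"
    have "G (s \<i> v) = Re (\<i> * f v)" using Gext[OF Vs[OF v]] fsc[OF v] by simp
    thus "F v = f v" using Gext[OF v] by (simp add: F_def complex_eq_iff)
  next
    fix v w assume "v \<in> C" "w \<in> C"
    thus "F (p v w) = F v + F w" by (simp add: F_def sdist Gadd algebra_simps)
  next
    fix c v assume v: "v \<in> C"
    show "F (s c v) = c * F v" by (rule Fsc[OF v])
  next
    fix v assume v: "v \<in> C"
    show "cmod (F v) \<le> q v"
    proof (cases "F v = 0")
      case True thus ?thesis using q_nonneg[OF v] by simp
    next
      case False
      let ?d = "cnj (sgn (F v))"
      have Fd: "F (s ?d v) = ?d * F v" by (rule Fsc[OF v])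
      have "cmod (F v) = Re (F (s ?d v))" using Fd cnj_sgn_mult[of "F v"] by simp
      also have "\<dots> = G (s ?d v)" by (rule ReF)
      also have "\<dots> \<le> q (s ?d v)" using v by (intro Gq) simp
      also have "\<dots> = q v" using q_scale[OF v] False by (simp add: norm_sgn)
      finally show ?thesis .
    qed
  qed
qed

end


locale setting =
  fixes W :: "'w kspace" and V :: "'w set" and \<phi> :: "'w \<Rightarrow> op"
  assumes A1: "K_operator_space W"
    and A2: "biK_invariant_subspace V W"
    and A3: "K_operator_space (W\<lparr>kcarrier := V\<rparr>)"
    and A4: "biK_linear_map (W\<lparr>kcarrier := V\<rparr>) \<phi>"
    and A5: "kcontinuous (W\<lparr>kcarrier := V\<rparr>) \<phi>"

sublocale setting \<subseteq> W: cvs "kcarrier W" "kplus W" "kscale W" "kzero W"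
  using A1 unfolding K_operator_space_def K_bimodule_def by (intro complex_vs_cvs) blast

context setting
begin

abbreviation "CC \<equiv> kcarrier W"
abbreviation "pp \<equiv> kplus W"
abbreviation "ss \<equiv> kscale W"
abbreviation "zz \<equiv> kzero W"
abbreviation "NN \<equiv> knorm W"
abbreviation "ll \<equiv> lact W"
abbreviation "rr \<equiv> ract W"

lemma bimod: "K_bimodule W" and ess: "essential W" and isn: "is_norm W" and akc: "abs_K_convex W"
  using A1 unfolding K_operator_space_def by blast+

lemmas bm = bimod[unfolded K_bimodule_def Let_def, THEN conjunct2]
lemmas bm1 = bm[THEN conjunct1]
lemmas bm2 = bm[THEN conjunct2, THEN conjunct1]
lemmas bm3 = bm[THEN conjunct2, THEN conjunct2, THEN conjunct1]
lemmas bm4 = bm[THEN conjunct2, THEN conjunct2, THEN conjunct2, THEN conjunct1]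
lemmas bm5 = bm[THEN conjunct2, THEN conjunct2, THEN conjunct2, THEN conjunct2, THEN conjunct1]
lemmas bm6 = bm[THEN conjunct2, THEN conjunct2, THEN conjunct2, THEN conjunct2, THEN conjunct2]

lemma lC[simp]: "a \<in> Kc \<Longrightarrow> v \<in> CC \<Longrightarrow> ll a v \<in> CC" using bm1 by blast
lemma rC[simp]: "a \<in> Kc \<Longrightarrow> v \<in> CC \<Longrightarrow> rr v a \<in> CC" using bm1 by blast
lemma l_comp: "a \<in> Kc \<Longrightarrow> b \<in> Kc \<Longrightarrow> v \<in> CC \<Longrightarrow> ll (a \<circ> b) v = ll a (ll b v)" using bm2 by blast
lemma r_comp: "a \<in> Kc \<Longrightarrow> b \<in> Kc \<Longrightarrow> v \<in> CC \<Longrightarrow> rr v (a \<circ> b) = rr (rr v a) b" using bm2 by blast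
lemma l_opadd: "a \<in> Kc \<Longrightarrow> b \<in> Kc \<Longrightarrow> v \<in> CC \<Longrightarrow> ll (opadd a b) v = pp (ll a v) (ll b v)" using bm3 by blast
lemma r_opadd: "a \<in> Kc \<Longrightarrow> b \<in> Kc \<Longrightarrow> v \<in> CC \<Longrightarrow> rr v (opadd a b) = pp (rr v a) (rr v b)" using bm3 by blast
lemma l_padd: "a \<in> Kc \<Longrightarrow> v \<in> CC \<Longrightarrow> w \<in> CC \<Longrightarrow> ll a (pp v w) = pp (ll a v) (ll a w)" using bm4 by blast
lemma r_padd: "a \<in> Kc \<Longrightarrow> v \<in> CC \<Longrightarrow> w \<in> CC \<Longrightarrow> rr (pp v w) a = pp (rr v a) (rr w a)" using bm4 by blast
lemma l_opscale: "a \<in> Kc \<Longrightarrow> v \<in> CC \<Longrightarrow> ll (opscale c a) v = ss c (ll a v)" using bm5 by blast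
lemma l_s: "a \<in> Kc \<Longrightarrow> v \<in> CC \<Longrightarrow> ll a (ss c v) = ss c (ll a v)" using bm5 by blast
lemma r_opscale: "a \<in> Kc \<Longrightarrow> v \<in> CC \<Longrightarrow> rr v (opscale c a) = ss c (rr v a)" using bm5 by blast
lemma r_s: "a \<in> Kc \<Longrightarrow> v \<in> CC \<Longrightarrow> rr (ss c v) a = ss c (rr v a)" using bm5 by blast
lemma lr: "a \<in> Kc \<Longrightarrow> b \<in> Kc \<Longrightarrow> v \<in> CC \<Longrightarrow> ll a (rr v b) = rr (ll a v) b" using bm6 by blast

lemma essD: "v \<in> CC \<Longrightarrow> \<exists>a\<in>Kc. \<exists>w\<in>CC. v = ll a w"
  using ess unfolding essential_def by blast

lemma N_nonneg: "v \<in> CC \<Longrightarrow> NN v \<ge> 0" using isn unfolding is_norm_def by blast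
lemma N_zero: "v \<in> CC \<Longrightarrow> NN v = 0 \<longleftrightarrow> v = zz" using isn unfolding is_norm_def by blast
lemma N_scale: "v \<in> CC \<Longrightarrow> NN (ss c v) = cmod c * NN v" using isn unfolding is_norm_def by blast
lemma N_tri: "v \<in> CC \<Longrightarrow> w \<in> CC \<Longrightarrow> NN (pp v w) \<le> NN v + NN w" using isn unfolding is_norm_def by blast
lemma N_z[simp]: "NN zz = 0" using N_zero[OF W.zC] by simp

lemma VC: "V \<subseteq> CC" and zV: "zz \<in> V" and Vp: "\<And>v w. v \<in> V \<Longrightarrow> w \<in> V \<Longrightarrow> pp v w \<in> V"
  and Vs: "\<And>c v. v \<in> V \<Longrightarrow> ss c v \<in> V"
  and Vl: "\<And>a v. a \<in> Kc \<Longrightarrow> v \<in> V \<Longrightarrow> ll a v \<in> V" and Vr: "\<And>a v. a \<in> Kc \<Longrightarrow> v \<in> V \<Longrightarrow> rr v a \<in> V"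
  using A2 unfolding biK_invariant_subspace_def by blast+

lemma VCe: "v \<in> V \<Longrightarrow> v \<in> CC" using VC by blast

lemma phiK: "v \<in> V \<Longrightarrow> \<phi> v \<in> Kc" using A4 by (simp add: biK_linear_map_def)
lemma phi_add: "v \<in> V \<Longrightarrow> w \<in> V \<Longrightarrow> \<phi> (pp v w) = opadd (\<phi> v) (\<phi> w)" using A4 by (simp add: biK_linear_map_def)
lemma phi_scale: "v \<in> V \<Longrightarrow> \<phi> (ss c v) = opscale c (\<phi> v)" using A4 by (simp add: biK_linear_map_def)
lemma phi_bimod: "a \<in> Kc \<Longrightarrow> b \<in> Kc \<Longrightarrow> v \<in> V \<Longrightarrow> \<phi> (rr (ll a v) b) = a \<circ> \<phi> v \<circ> b"
  using A4 by (simp add: biK_linear_map_def)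

lemma Kc_bounded: "a \<in> Kc \<Longrightarrow> bounded_op a" by (simp add: Kc_def compact_op_def)

lemma opscale_zero: "opscale 0 T = zop" by (simp add: fun_eq_iff opscale_def)

lemma l_zop: "v \<in> CC \<Longrightarrow> ll zop v = zz"
  using l_opscale[OF zop_Kc, of v 0] by (simp add: opscale_zero zop_Kc)
lemma r_zop: "v \<in> CC \<Longrightarrow> rr v zop = zz"
  using r_opscale[OF zop_Kc, of v 0] by (simp add: opscale_zero zop_Kc)
lemma l_zz: "a \<in> Kc \<Longrightarrow> ll a zz = zz"
  using l_s[OF _ W.zC, of a 0] by simp
lemma r_zz: "a \<in> Kc \<Longrightarrow> rr zz a = zz"
  using r_s[OF _ W.zC, of a 0] by simp

lemma rowop_vzero: "rowop vzero = zop"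
  by (simp add: fun_eq_iff rowop_def)
lemma colop_vzero: "colop vzero = zop"
  by (simp add: fun_eq_iff colop_def)

lemma convex_unit:
  assumes y: "y \<in> l2" "l2_norm y \<le> 1" and x: "x \<in> l2" "l2_norm x \<le> 1"
    and w: "w \<in> CC" "NN w \<le> 1"
  shows "NN (rr (ll (rowop y) w) (colop x)) \<le> 1"
proof -
  have "NN (pp (rr (ll (rowop y) w) (colop x)) (rr (ll zop w) zop)) \<le> 1"
    using akc unfolding abs_K_convex_def
    using w rowop_Kc[OF y(1)] colop_Kc[OF x(1)] zop_Kc row_convex_norm[OF y] col_convex_norm[OF x]
    by blast
  thus ?thesis using w y x by (simp add: l_zop r_zz r_zop rowop_Kc colop_Kc)
qed

lemma convex_est:
  assumes y: "y \<in> l2" and x: "x \<in> l2" and w: "w \<in> CC"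
  shows "NN (rr (ll (rowop y) w) (colop x)) \<le> l2_norm y * NN w * l2_norm x"
proof (cases "l2_norm y = 0 \<or> l2_norm x = 0 \<or> NN w = 0")
  case True
  hence "y = vzero \<or> x = vzero \<or> w = zz" using l2_norm_zero_iff[OF y] l2_norm_zero_iff[OF x] N_zero[OF w] by blast
  hence "rr (ll (rowop y) w) (colop x) = zz"
    using w x y by (auto simp: rowop_vzero colop_vzero l_zop r_zop l_zz r_zz rowop_Kc colop_Kc)
  thus ?thesis using y x w N_nonneg[OF w] by simp
next
  case False
  hence pos: "l2_norm y > 0" "l2_norm x > 0" "NN w > 0"
    using l2_norm_nonneg[OF y] l2_norm_nonneg[OF x] N_nonneg[OF w] by auto
  define y' where "y' = vscale (of_real (1 / l2_norm y)) y"
  define x' where "x' = vscale (of_real (1 / l2_norm x)) x"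
  define w' where "w' = ss (of_real (1 / NN w)) w"
  have y': "y' \<in> l2" "l2_norm y' \<le> 1" using y pos by (auto simp: y'_def l2_norm_vscale norm_divide)
  have x': "x' \<in> l2" "l2_norm x' \<le> 1" using x pos by (auto simp: x'_def l2_norm_vscale norm_divide)
  have w': "w' \<in> CC" "NN w' \<le> 1" using w pos by (auto simp: w'_def N_scale norm_divide)
  have ey: "y = vscale (of_real (l2_norm y)) y'" using pos by (simp add: y'_def vscale_vscale)
  have ex: "x = vscale (of_real (l2_norm x)) x'" using pos by (simp add: x'_def vscale_vscale)
  have ew: "w = ss (of_real (NN w)) w'" using pos w by (simp add: w'_def)
  have "rr (ll (rowop y) w) (colop x)
      = ss (of_real (l2_norm y * NN w * l2_norm x)) (rr (ll (rowop y') w') (colop x'))"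
  proof -
    have "rowop y = opscale (of_real (l2_norm y)) (rowop y')"
      by (subst ey) (simp add: rowop_vscale[OF y'(1)])
    moreover have "colop x = opscale (of_real (l2_norm x)) (colop x')"
      by (subst ex) (simp add: colop_vscale)
    ultimately show ?thesis
      using w' y' x'
      by (subst (1) ew) (simp add: l_opscale r_opscale l_s r_s rowop_Kc colop_Kc mult.commute mult.left_commute)
  qed
  hence "NN (rr (ll (rowop y) w) (colop x)) = l2_norm y * NN w * l2_norm x * NN (rr (ll (rowop y') w') (colop x'))"
    using pos w' y' x' by (simp add: N_scale rowop_Kc colop_Kc abs_mult norm_mult)
  also have "\<dots> \<le> l2_norm y * NN w * l2_norm x * 1"
    using convex_unit[OF y' x' w'] pos by (intro mult_left_mono) auto
  finally show ?thesis by simp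
qed

end


context setting
begin

definition Mphi where "Mphi = kmap_norm (W\<lparr>kcarrier := V\<rparr>) \<phi>"
definition f0 where "f0 v = \<phi> v (ebas 0) 0"

abbreviation "SV \<equiv> {op_norm (\<phi> v) | v. v \<in> V \<and> NN v \<le> 1}"

lemma Mphi_eq: "Mphi = Sup SV" by (simp add: Mphi_def kmap_norm_def)

lemma phi_z: "\<phi> zz = zop"
  using phi_scale[OF zV, of 0] by (simp add: opscale_zero)

lemma op_norm_zop: "op_norm zop = 0"
  using op_norm_le[of zop 0] op_norm_nonneg[OF zop_bounded] by simp

lemma opadd_neg_zop: "opadd T (opscale (-1) zop) = T"
  by (simp add: fun_eq_iff opadd_def opscale_def)

lemma SV_bdd: "bdd_above SV"
proof -
  have "\<forall>e>0. \<exists>d>0. \<forall>w\<in>V. NN (pp w (ss (-1) zz)) < d \<longrightarrow>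
          op_norm (opadd (\<phi> w) (opscale (-1) (\<phi> zz))) < e"
    by (rule bspec[OF A5[unfolded kcontinuous_def, simplified] zV])
  then obtain d where d: "d > 0"
    and dh: "\<And>w. w \<in> V \<Longrightarrow> NN (pp w (ss (-1) zz)) < d \<Longrightarrow> op_norm (opadd (\<phi> w) (opscale (-1) (\<phi> zz))) < 1"
    by (meson zero_less_one)
  have dh2: "op_norm (\<phi> w) < 1" if "w \<in> V" "NN w < d" for w
    using dh[OF that(1)] that VCe[OF that(1)] by (simp add: phi_z opadd_neg_zop)
  show ?thesis
  proof (rule bdd_aboveI[where M="2 / d"])
    fix r assume "r \<in> SV"
    then obtain v where v: "v \<in> V" "NN v \<le> 1" "r = op_norm (\<phi> v)" by blast
    let ?u = "ss (of_real (d / 2)) v"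
    have "NN ?u = d / 2 * NN v" using VCe[OF v(1)] d by (simp add: N_scale)
    also have "\<dots> \<le> d / 2 * 1" using v(2) d by (intro mult_left_mono) auto
    also have "\<dots> < d" using d by simp
    finally have "op_norm (\<phi> ?u) < 1" using dh2 Vs[OF v(1)] by blast
    moreover have "op_norm (\<phi> ?u) = d / 2 * op_norm (\<phi> v)"
      using phi_scale[OF v(1)] op_norm_opscale[OF Kc_bounded[OF phiK[OF v(1)]]] d by simp
    ultimately have "d / 2 * r < 1" using v(3) by simp
    thus "r \<le> 2 / d" using d by (simp add: field_simps)
  qed
qed

lemma z_in_SV: "0 \<in> SV"
proof -
  have "op_norm (\<phi> zz) \<in> SV" using zV by force
  thus ?thesis by (simp add: phi_z op_norm_zop)
qed

lemma M_nonneg: "Mphi \<ge> 0"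
  unfolding Mphi_eq by (rule cSup_upper[OF z_in_SV SV_bdd])

lemma phi_norm_bound:
  assumes v: "v \<in> V" shows "op_norm (\<phi> v) \<le> Mphi * NN v"
proof (cases "NN v = 0")
  case True
  hence "v = zz" using N_zero VCe[OF v] by blast
  thus ?thesis by (simp add: phi_z op_norm_zop)
next
  case False
  hence pos: "NN v > 0" using N_nonneg[OF VCe[OF v]] by simp
  let ?u = "ss (of_real (1 / NN v)) v"
  have "NN ?u = 1" using pos VCe[OF v] by (simp add: N_scale norm_divide)
  hence "op_norm (\<phi> ?u) \<in> SV" using Vs[OF v] by force
  hence "op_norm (\<phi> ?u) \<le> Mphi" unfolding Mphi_eq by (rule cSup_upper[OF _ SV_bdd])
  moreover have "op_norm (\<phi> ?u) = op_norm (\<phi> v) / NN v"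
    using phi_scale[OF v] op_norm_opscale[OF Kc_bounded[OF phiK[OF v]]] pos by (simp add: norm_divide)
  ultimately show ?thesis using pos by (simp add: divide_le_eq mult.commute)
qed

lemma f0_add: "v \<in> V \<Longrightarrow> w \<in> V \<Longrightarrow> f0 (pp v w) = f0 v + f0 w"
  by (simp add: f0_def phi_add opadd_def vadd_def)

lemma f0_scale: "v \<in> V \<Longrightarrow> f0 (ss c v) = c * f0 v"
  by (simp add: f0_def phi_scale opscale_def vscale_def)

lemma f0_bound:
  assumes v: "v \<in> V" shows "cmod (f0 v) \<le> Mphi * NN v"
proof -
  have b: "bounded_op (\<phi> v)" by (rule Kc_bounded[OF phiK[OF v]])
  have "cmod (f0 v) \<le> l2_norm (\<phi> v (ebas 0))"
    unfolding f0_def by (rule l2_coord_le[OF bounded_opD(1)[OF b l2_ebas]])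
  also have "\<dots> \<le> op_norm (\<phi> v)" by (rule op_norm_ge[OF b l2_ebas]) simp
  also have "\<dots> \<le> Mphi * NN v" by (rule phi_norm_bound[OF v])
  finally show ?thesis .
qed

lemma exists_F:
  "\<exists>F. (\<forall>v\<in>V. F v = f0 v) \<and> (\<forall>v\<in>CC. \<forall>w\<in>CC. F (pp v w) = F v + F w)
      \<and> (\<forall>c. \<forall>v\<in>CC. F (ss c v) = c * F v) \<and> (\<forall>v\<in>CC. cmod (F v) \<le> Mphi * NN v)"
proof -
  interpret H: cvs_hb CC pp ss zz "\<lambda>v. Mphi * NN v"
  proof unfold_locales
    fix v assume "v \<in> CC" thus "0 \<le> Mphi * NN v" using M_nonneg N_nonneg by simp
  next
    fix v w assume "v \<in> CC" "w \<in> CC"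
    thus "Mphi * NN (pp v w) \<le> Mphi * NN v + Mphi * NN w"
      using N_tri M_nonneg by (simp add: distrib_left[symmetric] mult_left_mono)
  next
    fix c v assume "v \<in> CC" thus "Mphi * NN (ss c v) = cmod c * (Mphi * NN v)" by (simp add: N_scale)
  qed
  show ?thesis
    by (rule H.complex_hb[OF VC zV Vp Vs f0_add f0_scale f0_bound])
qed

end

locale setting2 = setting +
  fixes F :: "'a \<Rightarrow> complex"
  assumes Fext: "\<And>v. v \<in> V \<Longrightarrow> F v = f0 v"
    and Fadd: "\<And>v w. v \<in> kcarrier W \<Longrightarrow> w \<in> kcarrier W \<Longrightarrow> F (kplus W v w) = F v + F w"
    and Fsc: "\<And>c v. v \<in> kcarrier W \<Longrightarrow> F (kscale W c v) = c * F v"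
    and Fbd: "\<And>v. v \<in> kcarrier W \<Longrightarrow> cmod (F v) \<le> Mphi * knorm W v"
begin

definition T where "T y w x = rr (ll (rowop y) w) (colop x)"
definition Psi where "Psi w x = (\<lambda>i. F (T (ebas i) w x))"
definition psi where "psi w = (\<lambda>x. if x \<in> l2 then Psi w x else vzero)"

lemma TC[simp]: "y \<in> l2 \<Longrightarrow> x \<in> l2 \<Longrightarrow> w \<in> CC \<Longrightarrow> T y w x \<in> CC"
  by (simp add: T_def rowop_Kc colop_Kc)

lemma F_T_bound: "y \<in> l2 \<Longrightarrow> x \<in> l2 \<Longrightarrow> w \<in> CC \<Longrightarrow>
    cmod (F (T y w x)) \<le> Mphi * (l2_norm y * NN w * l2_norm x)"
  using Fbd[OF TC] convex_est[of y x w] M_nonneg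
  by (simp add: T_def) (meson mult_left_mono order_trans)

lemma T_vadd_y: "y \<in> l2 \<Longrightarrow> y' \<in> l2 \<Longrightarrow> x \<in> l2 \<Longrightarrow> w \<in> CC \<Longrightarrow>
   T (vadd y y') w x = pp (T y w x) (T y' w x)"
  by (simp add: T_def rowop_vadd l_opadd r_padd rowop_Kc colop_Kc)

lemma T_vscale_y: "y \<in> l2 \<Longrightarrow> x \<in> l2 \<Longrightarrow> w \<in> CC \<Longrightarrow>
   T (vscale c y) w x = ss (cnj c) (T y w x)"
  by (simp add: T_def rowop_vscale l_opscale r_s rowop_Kc colop_Kc)

lemma T_vadd_x: "y \<in> l2 \<Longrightarrow> x \<in> l2 \<Longrightarrow> x' \<in> l2 \<Longrightarrow> w \<in> CC \<Longrightarrow>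
   T y w (vadd x x') = pp (T y w x) (T y w x')"
  by (simp add: T_def colop_vadd r_opadd rowop_Kc colop_Kc)

lemma T_vscale_x: "y \<in> l2 \<Longrightarrow> x \<in> l2 \<Longrightarrow> w \<in> CC \<Longrightarrow>
   T y w (vscale c x) = ss c (T y w x)"
  by (simp add: T_def colop_vscale r_opscale rowop_Kc colop_Kc)

lemma T_padd_w: "y \<in> l2 \<Longrightarrow> x \<in> l2 \<Longrightarrow> w \<in> CC \<Longrightarrow> w' \<in> CC \<Longrightarrow>
   T y (pp w w') x = pp (T y w x) (T y w' x)"
  by (simp add: T_def l_padd r_padd rowop_Kc colop_Kc)

lemma T_s_w: "y \<in> l2 \<Longrightarrow> x \<in> l2 \<Longrightarrow> w \<in> CC \<Longrightarrow>
   T y (ss c w) x = ss c (T y w x)"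
  by (simp add: T_def l_s r_s rowop_Kc colop_Kc)

lemma Psi_inner:
  assumes w: "w \<in> CC" and x: "x \<in> l2"
  shows "Psi w x \<in> l2" "\<And>y. y \<in> l2 \<Longrightarrow> l2_inner (Psi w x) y = F (T y w x)"
proof -
  define g where "g y = cnj (F (T y w x))" for y
  have add: "g (vadd y y') = g y + g y'" if "y \<in> l2" "y' \<in> l2" for y y'
    using that w x by (simp add: g_def T_vadd_y Fadd)
  have sc: "g (vscale c y) = c * g y" if "y \<in> l2" for c y
    using that w x by (simp add: g_def T_vscale_y Fsc)
  have bd: "cmod (g y) \<le> (Mphi * NN w * l2_norm x) * l2_norm y" if "y \<in> l2" for y
    using F_T_bound[OF that x w] by (simp add: g_def mult_ac)
  have eq: "(\<lambda>k. cnj (g (ebas k))) = Psi w x" by (simp add: g_def Psi_def fun_eq_iff)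
  show P: "Psi w x \<in> l2" using riesz(1)[OF add sc bd] eq by simp
  fix y assume y: "y \<in> l2"
  have "g y = l2_inner y (Psi w x)" using riesz(2)[OF add sc bd y] eq by simp
  hence "cnj (g y) = l2_inner (Psi w x) y" using l2_inner_cnj[OF P y] by simp
  thus "l2_inner (Psi w x) y = F (T y w x)" by (simp add: g_def)
qed

lemma Psi_norm:
  assumes w: "w \<in> CC" and x: "x \<in> l2"
  shows "l2_norm (Psi w x) \<le> Mphi * NN w * l2_norm x"
proof -
  let ?P = "Psi w x"
  have P: "?P \<in> l2" by (rule Psi_inner(1)[OF w x])
  have "complex_of_real ((l2_norm ?P)\<^sup>2) = F (T ?P w x)"
    using Psi_inner(2)[OF w x P] l2_inner_self[OF P] by simp
  hence "(l2_norm ?P)\<^sup>2 = cmod (F (T ?P w x))" by (metis norm_of_real abs_power2)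
  also have "\<dots> \<le> Mphi * (l2_norm ?P * NN w * l2_norm x)" by (rule F_T_bound[OF P x w])
  finally have h: "l2_norm ?P * l2_norm ?P \<le> (Mphi * NN w * l2_norm x) * l2_norm ?P"
    by (simp add: power2_eq_square mult_ac)
  show ?thesis
  proof (cases "l2_norm ?P = 0")
    case True thus ?thesis using M_nonneg N_nonneg[OF w] l2_norm_nonneg[OF x] by simp
  next
    case False
    hence "l2_norm ?P > 0" using l2_norm_nonneg[OF P] by simp
    thus ?thesis using h by (rule mult_right_le_imp_le[rotated])
  qed
qed

end


context setting2
begin

lemma ebas_same[simp]: "ebas k k = 1" by (simp add: ebas_def)
lemma vadd_apply: "vadd f g i = f i + g i" by (simp add: vadd_def)
lemma vscale_apply: "vscale c f i = c * f i" by (simp add: vscale_def)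

lemma psi_l2: "x \<in> l2 \<Longrightarrow> psi w x = Psi w x" by (simp add: psi_def)

lemma psi_bounded:
  assumes w: "w \<in> CC" shows "bounded_op (psi w)"
proof (rule bounded_opI[where C="Mphi * NN w"])
  fix x assume x: "x \<in> l2"
  show "psi w x \<in> l2" using Psi_inner(1)[OF w x] x by (simp add: psi_def)
  show "l2_norm (psi w x) \<le> Mphi * NN w * l2_norm x" using Psi_norm[OF w x] x by (simp add: psi_def)
next
  fix x assume "x \<notin> l2" thus "psi w x = vzero" by (simp add: psi_def)
next
  fix x y assume "x \<in> l2" "y \<in> l2"
  thus "psi w (vadd x y) = vadd (psi w x) (psi w y)"
    using w by (simp add: psi_def) (simp add: Psi_def T_vadd_x Fadd vadd_apply fun_eq_iff)
next
  fix c x assume "x \<in> l2"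
  thus "psi w (vscale c x) = vscale c (psi w x)"
    using w by (simp add: psi_def) (simp add: Psi_def T_vscale_x Fsc vscale_apply fun_eq_iff)
qed

lemma psi_add: "w \<in> CC \<Longrightarrow> w' \<in> CC \<Longrightarrow> psi (pp w w') = opadd (psi w) (psi w')"
  by (rule ext, case_tac "x \<in> l2")
     (simp_all add: psi_def Psi_def opadd_def vadd_def T_padd_w Fadd fun_eq_iff vzero_def)

lemma psi_scale: "w \<in> CC \<Longrightarrow> psi (ss c w) = opscale c (psi w)"
  by (rule ext, case_tac "x \<in> l2")
     (simp_all add: psi_def Psi_def opscale_def vscale_def T_s_w Fsc fun_eq_iff vzero_def)

lemma psi_left:
  assumes a: "a \<in> Kc" and w: "w \<in> CC"
  shows "psi (ll a w) = a \<circ> psi w"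
proof (rule ext)
  fix x show "psi (ll a w) x = (a \<circ> psi w) x"
  proof (cases "x \<in> l2")
    case x: True
    let ?P = "Psi w x"
    have P: "?P \<in> l2" by (rule Psi_inner(1)[OF w x])
    have ab: "bounded_op a" by (rule Kc_bounded[OF a])
    have "Psi (ll a w) x i = a ?P i" for i
    proof -
      obtain \<zeta> where \<zeta>: "\<zeta> \<in> l2" "rowop (ebas i) \<circ> a = rowop \<zeta>" using rowop_comp[OF a] by blast
      have "T (ebas i) (ll a w) x = T \<zeta> w x"
        unfolding T_def using l_comp[OF rowop_Kc[OF l2_ebas[of i]] a w, symmetric] \<zeta>(2) by simp
      hence "Psi (ll a w) x i = l2_inner ?P \<zeta>" using Psi_inner(2)[OF w x \<zeta>(1)] by (simp add: Psi_def)
      also have "\<dots> = rowop \<zeta> ?P 0" using P by (simp add: rowop_l2 vscale_def)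
      also have "\<dots> = rowop (ebas i) (a ?P) 0" using \<zeta>(2) by (metis comp_apply)
      also have "\<dots> = a ?P i" using bounded_opD(1)[OF ab P] by (simp add: rowop_l2 vscale_def)
      finally show ?thesis .
    qed
    thus ?thesis using x by (simp add: psi_def fun_eq_iff)
  next
    case False
    thus ?thesis using bounded_op_vzero[OF Kc_bounded[OF a]] by (simp add: psi_def)
  qed
qed

lemma comp_colop: "bounded_op b \<Longrightarrow> x \<in> l2 \<Longrightarrow> b \<circ> colop x = colop (b x)"
  by (auto simp: fun_eq_iff colop_def bounded_opD(4) bounded_op_vzero)

lemma psi_right:
  assumes b: "b \<in> Kc" and w: "w \<in> CC"
  shows "psi (rr w b) = psi w \<circ> b"
proof (rule ext)
  fix x show "psi (rr w b) x = (psi w \<circ> b) x"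
  proof (cases "x \<in> l2")
    case x: True
    have bb: "bounded_op b" by (rule Kc_bounded[OF b])
    have bx: "b x \<in> l2" by (rule bounded_opD(1)[OF bb x])
    have "T (ebas i) (rr w b) x = T (ebas i) w (b x)" for i
    proof -
      have "T (ebas i) (rr w b) x = rr (rr (ll (rowop (ebas i)) w) b) (colop x)"
        unfolding T_def using lr[OF rowop_Kc[OF l2_ebas] b w] by simp
      also have "\<dots> = rr (ll (rowop (ebas i)) w) (b \<circ> colop x)"
        using r_comp[OF b colop_Kc[OF x], of "ll (rowop (ebas i)) w"] w by (simp add: rowop_Kc)
      also have "\<dots> = T (ebas i) w (b x)" unfolding T_def comp_colop[OF bb x] ..
      finally show ?thesis .
    qed
    thus ?thesis using x bx by (simp add: psi_def Psi_def fun_eq_iff)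
  next
    case False
    have "b x = vzero" using bounded_opD(2)[OF Kc_bounded[OF b] False] .
    thus ?thesis using False bounded_op_vzero[OF psi_bounded[OF w]] by (simp add: psi_def)
  qed
qed

lemma psi_Kc: assumes w: "w \<in> CC" shows "psi w \<in> Kc"
proof -
  obtain a w' where a: "a \<in> Kc" "w' \<in> CC" "w = ll a w'" using essD[OF w] by blast
  have "psi w = a \<circ> psi w'" using psi_left[OF a(1,2)] a(3) by simp
  moreover have "compact_op (a \<circ> psi w')"
    using a(1) psi_bounded[OF a(2)] by (intro compact_comp) (simp_all add: Kc_def)
  ultimately show ?thesis by (simp add: Kc_def)
qed

lemma psi_ext:
  assumes v: "v \<in> V" shows "psi v = \<phi> v"
proof (rule ext)
  have vC: "v \<in> CC" by (rule VCe[OF v])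
  have pb: "bounded_op (\<phi> v)" by (rule Kc_bounded[OF phiK[OF v]])
  fix x show "psi v x = \<phi> v x"
  proof (cases "x \<in> l2")
    case x: True
    have "Psi v x i = \<phi> v x i" for i
    proof -
      have TV: "T (ebas i) v x \<in> V" unfolding T_def
        by (intro Vr Vl v rowop_Kc colop_Kc x l2_ebas)
      have "Psi v x i = f0 (T (ebas i) v x)" using Fext[OF TV] by (simp add: Psi_def)
      also have "\<dots> = (rowop (ebas i) \<circ> \<phi> v \<circ> colop x) (ebas 0) 0"
        unfolding f0_def T_def using phi_bimod[OF rowop_Kc[OF l2_ebas] colop_Kc[OF x] v] by simp
      also have "\<dots> = rowop (ebas i) (\<phi> v x) 0" by (simp add: colop_l2)
      also have "\<dots> = \<phi> v x i" using bounded_opD(1)[OF pb x] by (simp add: rowop_l2 vscale_def)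
      finally show ?thesis .
    qed
    thus ?thesis using x by (simp add: psi_def fun_eq_iff)
  next
    case False
    thus ?thesis using bounded_opD(2)[OF pb False] by (simp add: psi_def)
  qed
qed

lemma psi_opnorm: assumes w: "w \<in> CC" shows "op_norm (psi w) \<le> Mphi * NN w"
proof (rule op_norm_le)
  fix x assume x: "x \<in> l2"
  show "l2_norm (psi w x) \<le> Mphi * NN w * l2_norm x" using Psi_norm[OF w x] x by (simp add: psi_def)
qed (use M_nonneg N_nonneg[OF w] in simp)

lemma main:
  "\<exists>\<psi>. biK_linear_map W \<psi> \<and> kcontinuous W \<psi> \<and> (\<forall>v\<in>V. \<psi> v = \<phi> v)
           \<and> kmap_norm W \<psi> = kmap_norm (W\<lparr>kcarrier := V\<rparr>) \<phi>"
proof (intro exI[of _ psi] conjI)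
  show "biK_linear_map W psi"
    unfolding biK_linear_map_def
    by (auto simp: psi_Kc psi_add psi_scale psi_left psi_right)
next
  show "kcontinuous W psi"
    unfolding kcontinuous_def
  proof (intro ballI allI impI)
    fix v :: 'a and e :: real assume v: "v \<in> CC" and e: "e > 0"
    define d where "d = e / (Mphi + 1)"
    have d: "d > 0" using e M_nonneg by (simp add: d_def)
    show "\<exists>d>0. \<forall>w\<in>CC. NN (pp w (ss (- 1) v)) < d \<longrightarrow>
            op_norm (opadd (psi w) (opscale (- 1) (psi v))) < e"
    proof (intro exI[of _ d] conjI ballI impI d)
      fix w assume w: "w \<in> CC" and wd: "NN (pp w (ss (- 1) v)) < d"
      have "opadd (psi w) (opscale (- 1) (psi v)) = psi (pp w (ss (- 1) v))"
        using v w by (simp add: psi_add psi_scale)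
      hence "op_norm (opadd (psi w) (opscale (- 1) (psi v))) \<le> Mphi * NN (pp w (ss (- 1) v))"
        using psi_opnorm v w by simp
      also have "\<dots> \<le> Mphi * d" using wd M_nonneg by (intro mult_left_mono) auto
      also have "\<dots> < e"
      proof -
        have "Mphi * d = e * (Mphi / (Mphi + 1))" by (simp add: d_def)
        also have "\<dots> < e * 1" using e M_nonneg by (intro mult_strict_left_mono) auto
        finally show ?thesis by simp
      qed
      finally show "op_norm (opadd (psi w) (opscale (- 1) (psi v))) < e" .
    qed
  qed
next
  show "\<forall>v\<in>V. psi v = \<phi> v" using psi_ext by blast
next
  let ?SW = "{op_norm (psi v) | v. v \<in> CC \<and> NN v \<le> 1}"
  have "op_norm (psi zz) \<in> ?SW" by (intro CollectI exI[of _ zz]) simp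
  hence SWne: "?SW \<noteq> {}" by (metis equals0D)
  have SWb: "r \<le> Mphi" if rSW: "r \<in> ?SW" for r
  proof -
    obtain v where v: "v \<in> CC" "NN v \<le> 1" "r = op_norm (psi v)" using rSW by blast
    have "r \<le> Mphi * NN v" using psi_opnorm[OF v(1)] v(3) by simp
    also have "\<dots> \<le> Mphi * 1" using v(2) M_nonneg by (intro mult_left_mono) auto
    finally show ?thesis by simp
  qed
  have bddSW: "bdd_above ?SW" using SWb by (intro bdd_aboveI) blast
  have "Sup ?SW \<le> Mphi" using SWne SWb by (intro cSup_least) auto
  moreover have "Sup SV \<le> Sup ?SW"
  proof (rule cSup_subset_mono)
    show "SV \<noteq> {}" using z_in_SV by blast
    show "bdd_above ?SW" by (rule bddSW)
    show "SV \<subseteq> ?SW"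
    proof
      fix r assume "r \<in> SV"
      then obtain v where v: "v \<in> V" "NN v \<le> 1" "r = op_norm (\<phi> v)" by blast
      thus "r \<in> ?SW" using psi_ext[OF v(1)] VCe[OF v(1)] by (intro CollectI exI[of _ v]) simp
    qed
  qed
  ultimately have "Sup ?SW = Mphi" using Mphi_eq by simp
  thus "kmap_norm W psi = kmap_norm (W\<lparr>kcarrier := V\<rparr>) \<phi>" by (simp add: kmap_norm_def Mphi_def)
qed

end

theorem proposition3p4:
  fixes W :: "'w kspace" and V :: "'w set" and \<phi> :: "'w \<Rightarrow> op"
  assumes "K_operator_space W"
    and "biK_invariant_subspace V W"
    and "K_operator_space (W\<lparr>kcarrier := V\<rparr>)"
    and "biK_linear_map (W\<lparr>kcarrier := V\<rparr>) \<phi>"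
    and "kcontinuous (W\<lparr>kcarrier := V\<rparr>) \<phi>"
  shows "\<exists>\<psi>. biK_linear_map W \<psi> \<and> kcontinuous W \<psi> \<and> (\<forall>v\<in>V. \<psi> v = \<phi> v)
           \<and> kmap_norm W \<psi> = kmap_norm (W\<lparr>kcarrier := V\<rparr>) \<phi>"
proof -
  interpret S: setting W V \<phi> by (rule setting.intro) (rule assms)+
  obtain F where F: "\<forall>v\<in>V. F v = S.f0 v" "\<forall>v\<in>kcarrier W. \<forall>w\<in>kcarrier W. F (kplus W v w) = F v + F w"
    "\<forall>c. \<forall>v\<in>kcarrier W. F (kscale W c v) = c * F v" "\<forall>v\<in>kcarrier W. cmod (F v) \<le> S.Mphi * knorm W v"
    using S.exists_F by blast
  interpret S2: setting2 W V \<phi> F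
    by (rule setting2.intro, rule S.setting_axioms, unfold_locales) (use F in blast)+
  show ?thesis by (rule S2.main)
qed

end
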